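(* Let $F$ be a continuous distribution function on a nonempty set $\mathcal{X} \subseteq \mathbb{R}^p$ with finite mean. For each $n \in \mathbb{N}$, let $\{\boldsymbol{\xi}_i\}_{i=1}^n \subseteq \mathcal{X}$ be support points of $F$ of size $n$ and let $F_n$ be their empirical distribution function. Let $\bm{X} \sim F$ and $\bm{X}_n \sim F_n$. Then $\bm{X}_n \xrightarrow{d} \bm{X}$ as $n \to \infty$.
   Context: For $\bm{Y}, \bm{Y}' \stackrel{i.i.d.}{\sim} F$ and a point set $\{\bm{x}_i\}_{i=1}^n \subseteq \mathcal{X}$ with empirical distribution function (e.d.f.) $F_n$, the energy distance is $E(F,F_n) = \frac{2}{n}\sum_{i=1}^n \mathbb{E}\|\bm{x}_i - \bm{Y}\|_2 - \frac{1}{n^2}\sum_{i=1}^n\sum_{j=1}^n \|\bm{x}_i - \bm{x}_j\|_2 - \mathbb{E}\|\bm{Y}-\bm{Y}'\|_2.$ For fixed $n$, support points of $F$ are a point set $\{\boldsymbol{\xi}_i\}_{i=1}^n$ that minimizes $E(F,F_n)$ over all choices of $\bm{x}_1,\dots,\bm{x}_n \in \mathcal{X}$. *)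

theory Defs
  imports "HOL-Probability.Probability"
begin

definition cdf_vec :: "(real^'p) measure \<Rightarrow> real^'p \<Rightarrow> real" where
  "cdf_vec M t = measure M {x. \<forall>k. x $ k \<le> t $ k}"

definition energy_distance :: "(real^'p) measure \<Rightarrow> nat \<Rightarrow> (nat \<Rightarrow> real^'p) \<Rightarrow> real" where
  "energy_distance M n x =
     2 / real n * (\<Sum>i<n. (\<integral>y. norm (x i - y) \<partial>M))
     - 1 / (real n)^2 * (\<Sum>i<n. \<Sum>j<n. norm (x i - x j))
     - (\<integral>y. (\<integral>y'. norm (y - y') \<partial>M) \<partial>M)"

definition support_points :: "(real^'p) measure \<Rightarrow> (real^'p) set \<Rightarrow> nat \<Rightarrow> (nat \<Rightarrow> real^'p) \<Rightarrow> bool" where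
  "support_points M X n \<xi> \<longleftrightarrow>
     (\<forall>i<n. \<xi> i \<in> X) \<and>
     (\<forall>x. (\<forall>i<n. x i \<in> X) \<longrightarrow> energy_distance M n \<xi> \<le> energy_distance M n x)"

definition empirical_distr :: "nat \<Rightarrow> (nat \<Rightarrow> 'a) \<Rightarrow> 'a measure" where
  "empirical_distr n x = measure_pmf (map_pmf x (pmf_of_set {..<n}))"

definition conv_distr :: "(nat \<Rightarrow> (real^'p) measure) \<Rightarrow> (real^'p) measure \<Rightarrow> bool" where
  "conv_distr Mn M \<longleftrightarrow>
     (\<forall>f :: real^'p \<Rightarrow> real. continuous_on UNIV f \<and> bounded (range f) \<longrightarrow>
        (\<lambda>n. \<integral>x. f x \<partial>(Mn n)) \<longlonglongrightarrow> (\<integral>x. f x \<partial>M))"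

end

theory Submission
  imports Defs
begin

definition ip :: "('p::finite \<Rightarrow> real) \<Rightarrow> real^'p \<Rightarrow> real" where
  "ip \<theta> x = (\<Sum>k\<in>UNIV. \<theta> k * x$k)"

definition Gam :: "('p::finite \<Rightarrow> real) measure" where
  "Gam = PiM UNIV (\<lambda>_. density lborel std_normal_density)"

lemma prob_space_std: "prob_space (density lborel std_normal_density)"
  using prob_space_normal_density[of 1 0] by simp

lemma prob_space_Gam: "prob_space (Gam :: ('p::finite \<Rightarrow> real) measure)"
  unfolding Gam_def by (intro prob_space_PiM prob_space_std)

lemma sets_Gam: "sets (Gam :: ('p::finite \<Rightarrow> real) measure) = sets (PiM UNIV (\<lambda>_. borel))"
  unfolding Gam_def by (intro sets_PiM_cong) auto

lemma space_Gam[simp]: "space (Gam :: ('p::finite \<Rightarrow> real) measure) = UNIV"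
  unfolding Gam_def by (simp add: space_PiM)

lemma measurable_Gam1[measurable]: "(\<lambda>\<theta>. \<theta> i) \<in> borel_measurable (Gam :: ('p::finite \<Rightarrow> real) measure)"
proof -
  have "(\<lambda>\<theta>. \<theta> i) \<in> measurable (PiM (UNIV::'p set) (\<lambda>_. density lborel std_normal_density)) (density lborel std_normal_density)"
    by (rule measurable_component_singleton) auto
  then show ?thesis unfolding Gam_def
    by (subst measurable_cong_sets[OF refl, where N'="density lborel std_normal_density"]) auto
qed

lemma Gam_component: "distr (Gam :: ('p::finite \<Rightarrow> real) measure) borel (\<lambda>\<theta>. \<theta> i) = density lborel std_normal_density"
proof -
  have "distr (Gam :: ('p::finite \<Rightarrow> real) measure) borel (\<lambda>\<theta>. \<theta> i) = distr Gam (density lborel std_normal_density) (\<lambda>\<theta>. \<theta> i)"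
    by (rule distr_cong) auto
  also have "\<dots> = density lborel std_normal_density"
    unfolding Gam_def by (rule distr_PiM_component) (auto intro: prob_space_std)
  finally show ?thesis .
qed

lemma Gam_indep: "prob_space.indep_vars (Gam :: ('p::finite \<Rightarrow> real) measure) (\<lambda>_. borel) (\<lambda>i \<theta>. \<theta> i) UNIV"
proof -
  interpret prob_space "Gam :: ('p::finite \<Rightarrow> real) measure" by (rule prob_space_Gam)
  have "distr (Gam :: ('p::finite \<Rightarrow> real) measure) (\<Pi>\<^sub>M i\<in>UNIV. borel) (\<lambda>x. \<lambda>i\<in>UNIV. x i) = Gam"
  proof -
    have "(\<lambda>x::'p\<Rightarrow>real. restrict x UNIV) = (\<lambda>x. x)" by (auto simp: restrict_def)
    then show ?thesis by (simp add: distr_id2 sets_Gam)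
  qed
  also have "\<dots> = (\<Pi>\<^sub>M i\<in>UNIV. distr Gam borel (\<lambda>\<theta>. \<theta> i))"
    unfolding Gam_component unfolding Gam_def by simp
  finally show ?thesis
    by (subst indep_vars_iff_distr_eq_PiM) auto
qed

lemma distributed_Gam_comp: "distributed (Gam :: ('p::finite \<Rightarrow> real) measure) lborel (\<lambda>\<theta>. \<theta> i) (normal_density 0 1)"
proof -
  have "distr (Gam :: ('p::finite \<Rightarrow> real) measure) lborel (\<lambda>\<theta>. \<theta> i) = distr Gam borel (\<lambda>\<theta>. \<theta> i)"
    by (rule distr_cong) auto
  then show ?thesis
    unfolding distributed_def using Gam_component[of i]
    by (auto simp: measurable_cong_sets[OF refl sets_lborel])
qed

lemma Gam_distr_ip:
  fixes z :: "real^'p::finite"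
  assumes "z \<noteq> 0"
  shows "distributed (Gam :: ('p \<Rightarrow> real) measure) lborel (\<lambda>\<theta>. ip \<theta> z) (normal_density 0 (norm z))"
proof -
  interpret prob_space "Gam :: ('p::finite \<Rightarrow> real) measure" by (rule prob_space_Gam)
  define I where "I = {i. z$i \<noteq> 0}"
  have I: "finite I" "I \<noteq> {}" using assms by (auto simp: I_def vec_eq_iff)
  have ind: "indep_vars (\<lambda>_. borel) (\<lambda>i \<theta>. z$i * \<theta> i) I"
    using indep_vars_compose2[OF indep_vars_subset[OF Gam_indep, of I], of "\<lambda>i s. z$i * s" "\<lambda>_. borel"]
    by auto
  have d: "distributed Gam lborel (\<lambda>\<theta>. z$i * \<theta> i) (normal_density 0 \<bar>z$i\<bar>)" if "i \<in> I" for i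
    using normal_density_affine[OF distributed_Gam_comp[of i], of "z$i" 0] that
    by (auto simp: I_def)
  have "distributed Gam lborel (\<lambda>\<theta>. \<Sum>i\<in>I. z$i * \<theta> i) (normal_density (\<Sum>i\<in>I. 0) (sqrt (\<Sum>i\<in>I. \<bar>z$i\<bar>\<^sup>2)))"
    by (rule sum_indep_normal[OF I ind]) (use d in \<open>auto simp: I_def\<close>)
  moreover have "(\<lambda>\<theta>. \<Sum>i\<in>I. z$i * \<theta> i) = (\<lambda>\<theta>. ip \<theta> z)"
    unfolding ip_def by (auto intro!: ext sum.mono_neutral_left simp: I_def mult.commute)
  moreover have "sqrt (\<Sum>i\<in>I. \<bar>z$i\<bar>\<^sup>2) = norm z"
    unfolding norm_vec_def L2_set_def by (auto intro!: arg_cong[where f=sqrt] sum.mono_neutral_left simp: I_def)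
  ultimately show ?thesis by simp
qed

lemma Gam_integral:
  fixes z :: "real^'p::finite" and g :: "real \<Rightarrow> real"
  assumes "z \<noteq> 0" and [measurable]: "g \<in> borel_measurable borel"
  shows "(\<integral>\<theta>. g (ip \<theta> z) \<partial>(Gam :: ('p \<Rightarrow> real) measure)) = (\<integral>u. std_normal_density u * g (norm z * u) \<partial>lborel)"
proof -
  have nz: "norm z > 0" using assms by auto
  have "(\<integral>\<theta>. g (ip \<theta> z) \<partial>(Gam :: ('p \<Rightarrow> real) measure)) = (\<integral>s. normal_density 0 (norm z) s * g s \<partial>lborel)"
    by (rule distributed_integral[OF Gam_distr_ip[OF assms(1)], symmetric]) auto
  also have "\<dots> = norm z * (\<integral>u. normal_density 0 (norm z) (0 + norm z * u) * g (0 + norm z * u) \<partial>lborel)"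
    using lborel_integral_real_affine[of "norm z" "\<lambda>s. normal_density 0 (norm z) s * g s" 0] nz by simp
  also have "\<dots> = (\<integral>u. std_normal_density u * g (norm z * u) \<partial>lborel)"
  proof -
    have eq: "\<And>u. norm z * (normal_density 0 (norm z) (norm z * u) * g (norm z * u)) = std_normal_density u * g (norm z * u)"
      using nz by (simp add: normal_density_def power_mult_distrib real_sqrt_mult field_simps)
    have "norm z * (\<integral>u. normal_density 0 (norm z) (0 + norm z * u) * g (0 + norm z * u) \<partial>lborel)
       = (\<integral>u. norm z * (normal_density 0 (norm z) (norm z * u) * g (norm z * u)) \<partial>lborel)"
      by (simp add: integral_mult_right_zero)
    also have "\<dots> = (\<integral>u. std_normal_density u * g (norm z * u) \<partial>lborel)"
      by (simp only: eq)
    finally show ?thesis .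
  qed
  finally show ?thesis .
qed

lemma Gam_abs_ip:
  fixes z :: "real^'p::finite"
  shows "integrable (Gam :: ('p \<Rightarrow> real) measure) (\<lambda>\<theta>. \<bar>ip \<theta> z\<bar>)"
    and "(\<integral>\<^sup>+\<theta>. ennreal \<bar>ip \<theta> z\<bar> \<partial>(Gam :: ('p \<Rightarrow> real) measure)) = ennreal (sqrt (2/pi) * norm z)"
proof -
  have int: "integrable (Gam :: ('p \<Rightarrow> real) measure) (\<lambda>\<theta>. \<bar>ip \<theta> z\<bar>)"
  proof (cases "z = 0")
    case True then show ?thesis by (simp add: ip_def)
  next
    case False
    have "integrable lborel (\<lambda>x. normal_density 0 (norm z) x * \<bar>x\<bar>)"
      using integrable_normal_moment_abs[of "norm z" 0 1] False by simp
    then show ?thesis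
      using distributed_integrable[OF Gam_distr_ip[OF False], of abs] by auto
  qed
  show "integrable (Gam :: ('p \<Rightarrow> real) measure) (\<lambda>\<theta>. \<bar>ip \<theta> z\<bar>)" by (rule int)
  have val: "(\<integral>\<theta>. \<bar>ip \<theta> z\<bar> \<partial>(Gam :: ('p \<Rightarrow> real) measure)) = sqrt (2/pi) * norm z"
  proof (cases "z = 0")
    case True then show ?thesis by (simp add: ip_def)
  next
    case False
    have "(\<integral>\<theta>. \<bar>ip \<theta> z\<bar> \<partial>(Gam :: ('p \<Rightarrow> real) measure)) = (\<integral>u. std_normal_density u * \<bar>norm z * u\<bar> \<partial>lborel)"
      by (rule Gam_integral[OF False]) auto
    also have "\<dots> = (\<integral>u. norm z * (std_normal_density u * \<bar>u\<bar>^(2*0+1)) \<partial>lborel)"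
      by (simp add: abs_mult ac_simps)
    also have "\<dots> = norm z * sqrt (2/pi)"
      using integral_std_normal_moment_abs_odd[of 0] by (simp only: integral_mult_right_zero) simp
    finally show ?thesis by simp
  qed
  show "(\<integral>\<^sup>+\<theta>. ennreal \<bar>ip \<theta> z\<bar> \<partial>(Gam :: ('p \<Rightarrow> real) measure)) = ennreal (sqrt (2/pi) * norm z)"
    using nn_integral_eq_integral[OF int] val by simp
qed

definition Ind :: "('p::finite \<Rightarrow> real) \<times> real \<Rightarrow> real^'p \<Rightarrow> real" where
  "Ind w x = (if ip (fst w) x \<le> snd w then 1 else 0)"

definition Nm :: "(('p::finite \<Rightarrow> real) \<times> real) measure" where
  "Nm = Gam \<Otimes>\<^sub>M lborel"

lemma ip_diff: "ip \<theta> (x - y) = ip \<theta> x - ip \<theta> y"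
  unfolding ip_def by (simp add: sum_subtractf algebra_simps)

lemma measurable_vec_nth[measurable]: "(\<lambda>x::real^'n::finite. x$k) \<in> borel_measurable borel"
  by (intro borel_measurable_continuous_onI continuous_intros)

lemma measurable_ip[measurable]: "(\<lambda>\<theta>. ip \<theta> x) \<in> borel_measurable (Gam :: ('p::finite \<Rightarrow> real) measure)"
  unfolding ip_def by measurable

lemma measurable_ip2[measurable]: "(\<lambda>(\<theta>, x). ip \<theta> x) \<in> borel_measurable ((Gam :: ('p::finite \<Rightarrow> real) measure) \<Otimes>\<^sub>M borel)"
  unfolding ip_def by measurable

lemma onedim: "(\<integral>\<^sup>+r. ennreal ((indicator {r. a \<le> r} r - indicator {r. b \<le> r} r)\<^sup>2) \<partial>lborel) = ennreal \<bar>a - b\<bar>"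
    for a b :: real
proof -
  have "(\<lambda>r. ennreal ((indicator {r. a \<le> r} r - indicator {r. b \<le> r} r)\<^sup>2 :: real)) = indicator {min a b..<max a b}"
    by (auto simp: indicator_def fun_eq_iff)
  then show ?thesis by simp
qed

lemma sf_Gam: "sigma_finite_measure (Gam :: ('p::finite \<Rightarrow> real) measure)"
  using prob_space_Gam prob_space_imp_sigma_finite by blast

lemma sf_Nm: "sigma_finite_measure (Nm :: (('p::finite \<Rightarrow> real) \<times> real) measure)"
  unfolding Nm_def
  by (intro sigma_finite_pair_measure sf_Gam lborel.sigma_finite_measure_axioms)

lemma psf_Gam_lborel: "pair_sigma_finite (Gam :: ('p::finite \<Rightarrow> real) measure) lborel"
  unfolding pair_sigma_finite_def using sf_Gam lborel.sigma_finite_measure_axioms by blast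

lemma nn_to_int:
  fixes f :: "'a \<Rightarrow> real"
  assumes "f \<in> borel_measurable N" "\<And>w. 0 \<le> f w" "(\<integral>\<^sup>+w. ennreal (f w) \<partial>N) = ennreal c" "0 \<le> c"
  shows "integrable N f" "integral\<^sup>L N f = c"
proof -
  show i: "integrable N f"
    using assms by (auto simp: integrable_iff_bounded)
  have "ennreal (integral\<^sup>L N f) = ennreal c"
    using nn_integral_eq_integral[OF i] assms by simp
  then show "integral\<^sup>L N f = c"
  proof -
    have "0 \<le> integral\<^sup>L N f" using assms(2) by (simp add: integral_nonneg)
    with \<open>ennreal (integral\<^sup>L N f) = ennreal c\<close> assms(4) show ?thesis by (simp add: ennreal_inj)
  qed
qed

lemma measurable_Ind_Nm[measurable]:
  "(\<lambda>w. Ind w x) \<in> borel_measurable (Nm :: (('p::finite \<Rightarrow> real) \<times> real) measure)"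
  unfolding Ind_def Nm_def by measurable

lemma measurable_Ind2[measurable]:
  "(\<lambda>(y,w). Ind w y) \<in> borel_measurable (borel \<Otimes>\<^sub>M (Nm :: (('p::finite \<Rightarrow> real) \<times> real) measure))"
proof -
  have "(\<lambda>(y::real^'p,(\<theta>::'p\<Rightarrow>real),r::real). ip \<theta> y) \<in> borel_measurable (borel \<Otimes>\<^sub>M (Gam \<Otimes>\<^sub>M lborel))"
    unfolding ip_def by measurable
  then show ?thesis
    unfolding Ind_def Nm_def by (simp add: split_beta') measurable
qed

lemma rep_dist:
  fixes x y :: "real^'p::finite"
  shows "(\<integral>\<^sup>+w. ennreal ((Ind w x - Ind w y)\<^sup>2) \<partial>(Nm :: (('p \<Rightarrow> real) \<times> real) measure))
     = ennreal (sqrt (2/pi) * norm (x - y))"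
proof -
  interpret pair_sigma_finite "Gam :: ('p::finite \<Rightarrow> real) measure" lborel by (rule psf_Gam_lborel)
  have "(\<integral>\<^sup>+w. ennreal ((Ind w x - Ind w y)\<^sup>2) \<partial>(Nm :: (('p \<Rightarrow> real) \<times> real) measure))
      = (\<integral>\<^sup>+\<theta>. \<integral>\<^sup>+r. ennreal ((Ind (\<theta>,r) x - Ind (\<theta>,r) y)\<^sup>2) \<partial>lborel \<partial>Gam)"
    unfolding Nm_def by (rule sigma_finite_measure.nn_integral_fst[OF lborel.sigma_finite_measure_axioms, symmetric]) (unfold Ind_def, measurable)
  also have "\<dots> = (\<integral>\<^sup>+\<theta>. ennreal \<bar>ip \<theta> (x - y)\<bar> \<partial>Gam)"
  proof (intro nn_integral_cong)
    fix \<theta> :: "'p \<Rightarrow> real"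
    have "(\<lambda>r. ennreal ((Ind (\<theta>,r) x - Ind (\<theta>,r) y)\<^sup>2)) =
       (\<lambda>r. ennreal ((indicator {r. ip \<theta> x \<le> r} r - indicator {r. ip \<theta> y \<le> r} r)\<^sup>2))"
      by (auto simp: Ind_def indicator_def fun_eq_iff)
    then show "(\<integral>\<^sup>+r. ennreal ((Ind (\<theta>,r) x - Ind (\<theta>,r) y)\<^sup>2) \<partial>lborel) = ennreal \<bar>ip \<theta> (x - y)\<bar>"
      by (simp add: onedim ip_diff)
  qed
  also have "\<dots> = ennreal (sqrt (2/pi) * norm (x - y))"
    by (rule Gam_abs_ip)
  finally show ?thesis .
qed

lemma Ind_01: "Ind w x = 0 \<or> Ind w x = 1"
  by (simp add: Ind_def)

lemma Ind_sq: "(Ind w x - Ind w y)\<^sup>2 = Ind w x + Ind w y - 2 * Ind w x * Ind w y"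
  by (simp add: Ind_def power2_eq_square)

lemma Ind_bounds: "0 \<le> Ind w x" "Ind w x \<le> 1"
  by (auto simp: Ind_def)

locale ED =
  fixes M :: "(real^'p::finite) measure"
  assumes prob: "prob_space M" and sets_M[measurable_cong]: "sets M = sets borel"
    and int_norm: "integrable M norm"
begin

sublocale prob_space M by (rule prob)

definition gM where "gM x = (\<integral>y. norm (x - y) \<partial>M)"
definition CM where "CM = (\<integral>y. gM y \<partial>M)"
definition G :: "('p \<Rightarrow> real) \<times> real \<Rightarrow> real" where "G w = (\<integral>y. Ind w y \<partial>M)"

lemma int_dist: "integrable M (\<lambda>y. norm (x - y))"
proof (rule Bochner_Integration.integrable_bound)
  show "integrable M (\<lambda>y. norm x + norm y)"
    using int_norm by (intro Bochner_Integration.integrable_add) auto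
  show "(\<lambda>y. norm (x - y)) \<in> borel_measurable M" by measurable
  show "AE y in M. norm (norm (x - y)) \<le> norm (norm x + norm y)"
    by (auto intro!: AE_I2 norm_triangle_ineq4)
qed

lemma meas_Ind_M[measurable]: "(\<lambda>(w, y). Ind w y) \<in> borel_measurable ((Nm :: (('p \<Rightarrow> real) \<times> real) measure) \<Otimes>\<^sub>M M)"
proof -
  have "(\<lambda>(w, y). Ind w y) \<in> borel_measurable ((Nm :: (('p \<Rightarrow> real) \<times> real) measure) \<Otimes>\<^sub>M borel)"
    using measurable_Ind2 measurable_pair_swap by (metis (no_types, lifting) case_prod_conv measurable_cong split_beta')
  then show ?thesis
    by (subst measurable_cong_sets[OF sets_pair_measure_cong[OF refl sets_M] refl])
qed

lemma meas_Ind_M'[measurable]: "(\<lambda>(y, w). Ind w y) \<in> borel_measurable (M \<Otimes>\<^sub>M (Nm :: (('p \<Rightarrow> real) \<times> real) measure))"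
  by (subst measurable_cong_sets[OF sets_pair_measure_cong[OF sets_M refl] refl]) (rule measurable_Ind2)

lemma meas_gM[measurable]: "gM \<in> borel_measurable M"
  unfolding gM_def by measurable

lemma meas_G[measurable]: "G \<in> borel_measurable (Nm :: (('p \<Rightarrow> real) \<times> real) measure)"
  unfolding G_def by measurable

end

context ED begin

lemma P1: "prob (space M) = 1" by (rule prob_space.prob_space[OF prob])

lemma int_Ind: "integrable M (\<lambda>y. Ind w y)"
  by (rule integrable_const_bound[where B=1]) (auto simp: Ind_def)

lemma G_bounds: "0 \<le> G w" "G w \<le> 1"
proof -
  show "0 \<le> G w" unfolding G_def by (simp add: Ind_bounds integral_nonneg)
  have "G w \<le> (\<integral>y. 1 \<partial>M)" unfolding G_def
    by (intro integral_mono int_Ind) (auto simp: Ind_bounds)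
  then show "G w \<le> 1" by (simp add: P1)
qed

lemma inner_M: "(\<integral>y. (Ind w x - Ind w y)\<^sup>2 \<partial>M) = Ind w x + G w - 2 * Ind w x * G w"
proof -
  have "(\<integral>y. (Ind w x - Ind w y)\<^sup>2 \<partial>M) = (\<integral>y. Ind w x + (1 - 2 * Ind w x) * Ind w y \<partial>M)"
    by (intro Bochner_Integration.integral_cong) (auto simp: Ind_sq algebra_simps)
  also have "\<dots> = Ind w x + (1 - 2 * Ind w x) * G w"
    using int_Ind[of w] by (simp add: G_def P1)
  finally show ?thesis by (simp add: algebra_simps)
qed

lemma gM_bound: "gM x \<le> norm x + (\<integral>y. norm y \<partial>M)"
proof -
  have "gM x \<le> (\<integral>y. norm x + norm y \<partial>M)" unfolding gM_def
    using int_norm by (intro integral_mono int_dist) (auto intro: norm_triangle_ineq4)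
  also have "\<dots> = norm x + (\<integral>y. norm y \<partial>M)" using int_norm by (simp add: prob_space)
  finally show ?thesis .
qed

lemma gM_nonneg: "0 \<le> gM x" unfolding gM_def by (simp add: integral_nonneg)

lemma int_gM: "integrable M gM"
proof (rule Bochner_Integration.integrable_bound)
  show "integrable M (\<lambda>y. norm y + (\<integral>y. norm y \<partial>M))"
    using int_norm by (intro Bochner_Integration.integrable_add) auto
  show "AE y in M. norm (gM y) \<le> norm (norm y + (\<integral>y. norm y \<partial>M))"
    using gM_bound gM_nonneg by (auto intro!: AE_I2 simp: integral_nonneg)
qed simp

lemma psf_M_Nm: "pair_sigma_finite M (Nm :: (('p \<Rightarrow> real) \<times> real) measure)"
  unfolding pair_sigma_finite_def using sf_Nm prob_space_imp_sigma_finite prob by blast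

abbreviation c0 :: real where "c0 \<equiv> sqrt (2/pi)"

lemma h_int:
  fixes x :: "real^'p"
  defines "h \<equiv> \<lambda>w. Ind w x + G w - 2 * Ind w x * G w"
  shows "integrable (Nm :: (('p \<Rightarrow> real) \<times> real) measure) h" "integral\<^sup>L Nm h = c0 * gM x"
proof -
  interpret P: pair_sigma_finite M "Nm :: (('p \<Rightarrow> real) \<times> real) measure" by (rule psf_M_Nm)
  have hnn: "0 \<le> h w" for w unfolding h_def
    using Ind_01[of w x] G_bounds[of w] by (auto simp: algebra_simps)
  have "(\<integral>\<^sup>+w. ennreal (h w) \<partial>Nm) = (\<integral>\<^sup>+w. \<integral>\<^sup>+y. ennreal ((Ind w x - Ind w y)\<^sup>2) \<partial>M \<partial>(Nm :: (('p \<Rightarrow> real) \<times> real) measure))"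
  proof (intro nn_integral_cong)
    fix w
    have "integrable M (\<lambda>y. (Ind w x - Ind w y)\<^sup>2)"
      by (rule integrable_const_bound[where B=1]) (auto simp: Ind_def)
    then show "ennreal (h w) = (\<integral>\<^sup>+y. ennreal ((Ind w x - Ind w y)\<^sup>2) \<partial>M)"
      by (subst nn_integral_eq_integral) (auto simp: inner_M h_def)
  qed
  also have "\<dots> = (\<integral>\<^sup>+y. \<integral>\<^sup>+w. ennreal ((Ind w x - Ind w y)\<^sup>2) \<partial>(Nm :: (('p \<Rightarrow> real) \<times> real) measure) \<partial>M)"
    by (rule P.Fubini[where f="\<lambda>(y,w). ennreal ((Ind w x - Ind w y)\<^sup>2)", simplified]) measurable
  also have "\<dots> = (\<integral>\<^sup>+y. ennreal (c0 * norm (x - y)) \<partial>M)"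
    by (simp add: rep_dist)
  also have "\<dots> = ennreal (c0 * gM x)"
    unfolding gM_def using int_dist[of x]
    by (subst nn_integral_eq_integral) auto
  finally have e: "(\<integral>\<^sup>+w. ennreal (h w) \<partial>Nm) = ennreal (c0 * gM x)" .
  have m: "h \<in> borel_measurable Nm" unfolding h_def by measurable
  show "integrable (Nm :: (('p \<Rightarrow> real) \<times> real) measure) h" "integral\<^sup>L Nm h = c0 * gM x"
    using nn_to_int[OF m hnn e] gM_nonneg by auto
qed

end

context ED begin

lemma pair_int:
  fixes x y :: "real^'p"
  shows "integrable (Nm :: (('p \<Rightarrow> real) \<times> real) measure) (\<lambda>w. (Ind w x - Ind w y)\<^sup>2)"
    "(\<integral>w. (Ind w x - Ind w y)\<^sup>2 \<partial>(Nm :: (('p \<Rightarrow> real) \<times> real) measure)) = c0 * norm (x - y)"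
  using nn_to_int[OF _ _ rep_dist[of x y]] by auto

lemma GG_int:
  shows "integrable (Nm :: (('p \<Rightarrow> real) \<times> real) measure) (\<lambda>w. 2 * G w * (1 - G w))"
    "(\<integral>w. 2 * G w * (1 - G w) \<partial>(Nm :: (('p \<Rightarrow> real) \<times> real) measure)) = c0 * CM"
proof -
  interpret P: pair_sigma_finite M "Nm :: (('p \<Rightarrow> real) \<times> real) measure" by (rule psf_M_Nm)
  define h where "h \<equiv> \<lambda>y w. Ind w y + G w - 2 * Ind w y * G w"
  have hnn: "0 \<le> h y w" for y w unfolding h_def
    using Ind_01[of w y] G_bounds[of w] by (auto simp: algebra_simps)
  have "(\<integral>\<^sup>+w. ennreal (2 * G w * (1 - G w)) \<partial>Nm) = (\<integral>\<^sup>+w. \<integral>\<^sup>+y. ennreal (h y w) \<partial>M \<partial>(Nm :: (('p \<Rightarrow> real) \<times> real) measure))"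
  proof (intro nn_integral_cong)
    fix w
    have i: "integrable M (\<lambda>y. h y w)" unfolding h_def
      using int_Ind[of w] by auto
    have "(\<integral>y. h y w \<partial>M) = 2 * G w * (1 - G w)"
      unfolding h_def using int_Ind[of w] by (simp add: G_def[symmetric] P1 algebra_simps)
    then show "ennreal (2 * G w * (1 - G w)) = (\<integral>\<^sup>+y. ennreal (h y w) \<partial>M)"
      by (subst nn_integral_eq_integral[OF i]) (auto simp: hnn)
  qed
  also have "\<dots> = (\<integral>\<^sup>+y. \<integral>\<^sup>+w. ennreal (h y w) \<partial>(Nm :: (('p \<Rightarrow> real) \<times> real) measure) \<partial>M)"
    by (rule P.Fubini[where f="\<lambda>(y,w). ennreal (h y w)", simplified]) (unfold h_def, measurable)
  also have "\<dots> = (\<integral>\<^sup>+y. ennreal (c0 * gM y) \<partial>M)"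
  proof (intro nn_integral_cong)
    fix y
    show "(\<integral>\<^sup>+w. ennreal (h y w) \<partial>(Nm :: (('p \<Rightarrow> real) \<times> real) measure)) = ennreal (c0 * gM y)"
      using h_int[of y] hnn unfolding h_def by (subst nn_integral_eq_integral) auto
  qed
  also have "\<dots> = ennreal (c0 * CM)"
    unfolding CM_def using int_gM gM_nonneg
    by (subst nn_integral_eq_integral) auto
  finally have e: "(\<integral>\<^sup>+w. ennreal (2 * G w * (1 - G w)) \<partial>Nm) = ennreal (c0 * CM)" .
  have nn: "0 \<le> 2 * G w * (1 - G w)" for w using G_bounds[of w] by auto
  have "0 \<le> CM" unfolding CM_def using gM_nonneg by (simp add: integral_nonneg)
  then show "integrable (Nm :: (('p \<Rightarrow> real) \<times> real) measure) (\<lambda>w. 2 * G w * (1 - G w))"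
    "(\<integral>w. 2 * G w * (1 - G w) \<partial>(Nm :: (('p \<Rightarrow> real) \<times> real) measure)) = c0 * CM"
    using nn_to_int[OF _ nn e] by auto
qed

lemma pointwise_id:
  fixes a :: "nat \<Rightarrow> real" and g :: real
  assumes "n \<ge> 1" "\<And>i. a i = 0 \<or> a i = 1"
  shows "2 / real n * (\<Sum>i<n. a i + g - 2 * a i * g) - 1 / (real n)\<^sup>2 * (\<Sum>i<n. \<Sum>j<n. (a i - a j)\<^sup>2) - 2 * g * (1 - g)
     = 2 * ((\<Sum>i<n. a i) / real n - g)\<^sup>2"
proof -
  define S where "S = (\<Sum>i<n. a i)"
  have sq: "a i * a i = a i" for i using assms(2)[of i] by auto
  have 1: "(\<Sum>i<n. a i + g - 2 * a i * g) = S + n * g - 2 * S * g"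
    by (simp add: S_def sum.distrib sum_subtractf sum_distrib_right sum_distrib_left mult.assoc)
  have "(\<Sum>i<n. \<Sum>j<n. (a i - a j)\<^sup>2) = (\<Sum>i<n. \<Sum>j<n. a i * a i + a j * a j - 2 * (a i * a j))"
    by (simp add: power2_eq_square algebra_simps)
  also have "\<dots> = (\<Sum>i<n. \<Sum>j<n. a i + a j - 2 * (a i * a j))" by (simp add: sq)
  also have "\<dots> = (\<Sum>i<n. \<Sum>j<n. a i) + (\<Sum>i<n. \<Sum>j<n. a j) - 2 * (\<Sum>i<n. \<Sum>j<n. a i * a j)"
    by (simp add: sum.distrib sum_subtractf sum_distrib_left)
  also have "\<dots> = 2 * n * S - 2 * S * S"
  proof -
    have p: "(\<Sum>i<n. \<Sum>j<n. a i * a j) = S * S" unfolding S_def by (simp add: sum_product)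
    have q1: "(\<Sum>i<n. \<Sum>j<n. a i) = n * S" unfolding S_def by (simp add: sum_distrib_left)
    have q2: "(\<Sum>i<n. \<Sum>j<n. a j) = n * S" unfolding S_def by simp
    show ?thesis unfolding p q1 q2 by simp
  qed
  finally have 2: "(\<Sum>i<n. \<Sum>j<n. (a i - a j)\<^sup>2) = 2 * n * S - 2 * S * S" .
  have n: "real n > 0" using assms by auto
  show ?thesis unfolding 1 2 S_def[symmetric] using n
    by (simp add: field_simps power2_eq_square)
qed

end

context ED begin

lemma energy_id:
  fixes x :: "nat \<Rightarrow> real^'p"
  assumes n: "n \<ge> 1"
  shows "integrable (Nm :: (('p \<Rightarrow> real) \<times> real) measure) (\<lambda>w. 2 * ((\<Sum>i<n. Ind w (x i)) / real n - G w)\<^sup>2)"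
    "c0 * energy_distance M n x = (\<integral>w. 2 * ((\<Sum>i<n. Ind w (x i)) / real n - G w)\<^sup>2 \<partial>(Nm :: (('p \<Rightarrow> real) \<times> real) measure))"
proof -
  define F where "F = (\<lambda>w. 2 / real n * (\<Sum>i<n. Ind w (x i) + G w - 2 * Ind w (x i) * G w)
     - 1 / (real n)\<^sup>2 * (\<Sum>i<n. \<Sum>j<n. (Ind w (x i) - Ind w (x j))\<^sup>2) - 2 * G w * (1 - G w))"
  have Feq: "F = (\<lambda>w. 2 * ((\<Sum>i<n. Ind w (x i)) / real n - G w)\<^sup>2)"
    unfolding F_def by (intro ext pointwise_id[OF n] Ind_01)
  have i1: "integrable (Nm :: (('p \<Rightarrow> real) \<times> real) measure) (\<lambda>w. Ind w (x i) + G w - 2 * Ind w (x i) * G w)" for i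
    by (rule h_int)
  have i2: "integrable (Nm :: (('p \<Rightarrow> real) \<times> real) measure) (\<lambda>w. (Ind w (x i) - Ind w (x j))\<^sup>2)" for i j
    by (rule pair_int)
  have iF: "integrable (Nm :: (('p \<Rightarrow> real) \<times> real) measure) F"
  proof -
    have a: "integrable (Nm :: (('p \<Rightarrow> real) \<times> real) measure) (\<lambda>w. \<Sum>i<n. Ind w (x i) + G w - 2 * Ind w (x i) * G w)"
      by (rule Bochner_Integration.integrable_sum) (rule i1)
    have b: "integrable (Nm :: (('p \<Rightarrow> real) \<times> real) measure) (\<lambda>w. \<Sum>i<n. \<Sum>j<n. (Ind w (x i) - Ind w (x j))\<^sup>2)"
      by (intro Bochner_Integration.integrable_sum i2)
    show ?thesis unfolding F_def
      by (rule Bochner_Integration.integrable_diff[OF Bochner_Integration.integrable_diff[OF integrable_mult_right[OF a] integrable_mult_right[OF b]] GG_int(1)])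
  qed
  have "integral\<^sup>L (Nm :: (('p \<Rightarrow> real) \<times> real) measure) F =
     2 / real n * (\<Sum>i<n. c0 * gM (x i)) - 1 / (real n)\<^sup>2 * (\<Sum>i<n. \<Sum>j<n. c0 * norm (x i - x j)) - c0 * CM"
    unfolding F_def using i1 i2 GG_int
    by (simp add: Bochner_Integration.integral_diff Bochner_Integration.integral_sum
        Bochner_Integration.integrable_diff integrable_mult_right Bochner_Integration.integrable_sum h_int pair_int)
  also have "\<dots> = c0 * energy_distance M n x"
    unfolding energy_distance_def gM_def CM_def
    by (simp add: sum_distrib_left[symmetric] algebra_simps)
  finally show "c0 * energy_distance M n x = (\<integral>w. 2 * ((\<Sum>i<n. Ind w (x i)) / real n - G w)\<^sup>2 \<partial>(Nm :: (('p \<Rightarrow> real) \<times> real) measure))"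
    using Feq by simp
  show "integrable (Nm :: (('p \<Rightarrow> real) \<times> real) measure) (\<lambda>w. 2 * ((\<Sum>i<n. Ind w (x i)) / real n - G w)\<^sup>2)"
    using iF Feq by simp
qed

lemma energy_nonneg: "n \<ge> 1 \<Longrightarrow> 0 \<le> energy_distance M n x"
proof -
  assume n: "n \<ge> 1"
  have "0 \<le> c0 * energy_distance M n x"
    using energy_id[OF n, of x] by (simp add: integral_nonneg)
  then show ?thesis using pi_gt_zero by (simp add: zero_le_mult_iff)
qed

end

context ED begin

lemma exists_le:
  fixes f :: "real^'p \<Rightarrow> real"
  assumes "integrable M f" "AE y in M. y \<in> X" "integral\<^sup>L M f \<le> 0"
  shows "\<exists>y\<in>X. f y \<le> 0"
proof (rule ccontr)
  assume neg: "\<not> ?thesis"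
  from assms(2) have "AE y in M. 0 < f y"
    by eventually_elim (use neg in force)
  then have "integral\<^sup>L M (\<lambda>_. 0) < integral\<^sup>L M f"
    using assms(1) by (intro integral_less_AE_space) (auto simp: emeasure_space_1)
  with assms(3) show False by simp
qed

definition Sk :: "nat \<Rightarrow> (nat \<Rightarrow> real^'p) \<Rightarrow> real" where "Sk k x = (\<Sum>i<k. gM (x i))"
definition Pk :: "nat \<Rightarrow> (nat \<Rightarrow> real^'p) \<Rightarrow> real" where "Pk k x = (\<Sum>i<k. \<Sum>j<k. norm (x i - x j))"
definition Tk :: "nat \<Rightarrow> nat \<Rightarrow> (nat \<Rightarrow> real^'p) \<Rightarrow> real" where
  "Tk n k x = 2 * n * Sk k x - Pk k x + 2 * (real n - k) * n * CM - 2 * (real n - k) * Sk k x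
     - (real n - k) * (real n - k - 1) * CM"

lemma Sk_upd': "Sk (Suc k) (x(k := y)) = Sk k x + gM y"
proof -
  have "(\<Sum>i<k. gM ((x(k := y)) i)) = (\<Sum>i<k. gM (x i))" by (intro sum.cong) auto
  then show ?thesis unfolding Sk_def by simp
qed

lemma Pk_upd: "Pk (Suc k) (x(k := y)) = Pk k x + 2 * (\<Sum>i<k. norm (x i - y))"
proof -
  let ?x = "x(k := y)"
  have e1: "(\<Sum>j<k. norm (?x i - ?x j)) = (\<Sum>j<k. norm (?x i - x j))" for i by (intro sum.cong) auto
  have a: "(\<Sum>j<Suc k. norm (?x i - ?x j)) = (\<Sum>j<k. norm (x i - x j)) + norm (x i - y)" if "i < k" for i
  proof -
    have "(\<Sum>j<k. norm (?x i - ?x j)) = (\<Sum>j<k. norm (x i - x j))" using that by (intro sum.cong) auto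
    then show ?thesis using that by simp
  qed
  have b: "(\<Sum>j<Suc k. norm (?x k - ?x j)) = (\<Sum>j<k. norm (x j - y))"
  proof -
    have "(\<Sum>j<k. norm (?x k - ?x j)) = (\<Sum>j<k. norm (x j - y))" by (intro sum.cong) (auto simp: norm_minus_commute)
    then show ?thesis by simp
  qed
  have "Pk (Suc k) ?x = (\<Sum>i<k. \<Sum>j<Suc k. norm (?x i - ?x j)) + (\<Sum>j<Suc k. norm (?x k - ?x j))"
    unfolding Pk_def by (rule sum.lessThan_Suc)
  also have "\<dots> = (\<Sum>i<k. (\<Sum>j<k. norm (x i - x j)) + norm (x i - y)) + (\<Sum>j<k. norm (x j - y))"
    using a b by simp
  also have "\<dots> = Pk k x + 2 * (\<Sum>i<k. norm (x i - y))"
    unfolding Pk_def by (simp add: sum.distrib)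
  finally show ?thesis .
qed

lemma Tk_step:
  "Tk n (Suc k) (x(k := y)) = Tk n k x + (2 * (real k + 1) * gM y - 2 * (\<Sum>i<k. norm (x i - y)) + 2 * Sk k x - 2 * (real k + 1) * CM)"
  unfolding Tk_def Sk_upd' Pk_upd by (simp add: algebra_simps)

lemma int_Delta:
  "integrable M (\<lambda>y. 2 * (real k + 1) * gM y - 2 * (\<Sum>i<k. norm (x i - y)) + 2 * Sk k x - 2 * (real k + 1) * CM)"
  "(\<integral>y. 2 * (real k + 1) * gM y - 2 * (\<Sum>i<k. norm (x i - y)) + 2 * Sk k x - 2 * (real k + 1) * CM \<partial>M) = 0"
proof -
  have i: "integrable M (\<lambda>y. \<Sum>i<k. norm (x i - y))" by (intro Bochner_Integration.integrable_sum int_dist)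
  show "integrable M (\<lambda>y. 2 * (real k + 1) * gM y - 2 * (\<Sum>i<k. norm (x i - y)) + 2 * Sk k x - 2 * (real k + 1) * CM)"
    using i int_gM by auto
  have "(\<integral>y. (\<Sum>i<k. norm (x i - y)) \<partial>M) = Sk k x"
    unfolding Sk_def gM_def by (intro Bochner_Integration.integral_sum int_dist)
  then show "(\<integral>y. 2 * (real k + 1) * gM y - 2 * (\<Sum>i<k. norm (x i - y)) + 2 * Sk k x - 2 * (real k + 1) * CM \<partial>M) = 0"
    using i int_gM by (simp add: CM_def P1)
qed

lemma exists_good:
  assumes n: "n \<ge> 1" and X: "AE y in M. y \<in> X"
  shows "\<exists>x. (\<forall>i<n. x i \<in> X) \<and> energy_distance M n x \<le> CM / n"
proof -
  have "\<exists>x. (\<forall>i<k. x i \<in> X) \<and> Tk n k x \<le> (real n)\<^sup>2 * CM + n * CM" if "k \<le> n" for k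
    using that
  proof (induction k)
    case 0 then show ?case by (auto simp: Tk_def Sk_def Pk_def power2_eq_square algebra_simps)
  next
    case (Suc k)
    then obtain x where x: "\<forall>i<k. x i \<in> X" "Tk n k x \<le> (real n)\<^sup>2 * CM + n * CM" by auto
    have "\<exists>y\<in>X. 2 * (real k + 1) * gM y - 2 * (\<Sum>i<k. norm (x i - y)) + 2 * Sk k x - 2 * (real k + 1) * CM \<le> 0"
      by (rule exists_le[OF int_Delta(1)[of k x] X]) (simp only: int_Delta(2)[of k x])
    then obtain y where y: "y \<in> X" "2 * (real k + 1) * gM y - 2 * (\<Sum>i<k. norm (x i - y)) + 2 * Sk k x - 2 * (real k + 1) * CM \<le> 0"
      by blast
    have "\<forall>i<Suc k. (x(k := y)) i \<in> X" using x y by (auto simp: less_Suc_eq)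
    moreover have "Tk n (Suc k) (x(k := y)) \<le> (real n)\<^sup>2 * CM + n * CM"
      using Tk_step[of n k x y] x(2) y(2) by linarith
    ultimately show ?case by blast
  qed
  then obtain x where x: "\<forall>i<n. x i \<in> X" "Tk n n x \<le> (real n)\<^sup>2 * CM + n * CM" by auto
  have "energy_distance M n x = Tk n n x / (real n)\<^sup>2 - CM"
    using n unfolding energy_distance_def Tk_def Sk_def Pk_def gM_def CM_def
    by (simp add: field_simps power2_eq_square sum_distrib_left)
  also have "\<dots> \<le> ((real n)\<^sup>2 * CM + n * CM) / (real n)\<^sup>2 - CM"
    using x(2) n by (intro diff_right_mono divide_right_mono) auto
  also have "\<dots> = CM / n" using n by (simp add: field_simps power2_eq_square)
  finally show ?thesis using x by blast
qed

end

context ED begin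

lemma int_psi_Ind:
  fixes \<psi> :: "('p \<Rightarrow> real) \<times> real \<Rightarrow> real"
  assumes "integrable (Nm :: (('p \<Rightarrow> real) \<times> real) measure) \<psi>"
  shows "integrable (Nm :: (('p \<Rightarrow> real) \<times> real) measure) (\<lambda>w. \<psi> w * Ind w x)"
proof (rule Bochner_Integration.integrable_bound[OF assms])
  have [measurable]: "\<psi> \<in> borel_measurable Nm" using assms by auto
  show "(\<lambda>w. \<psi> w * Ind w x) \<in> borel_measurable Nm" by measurable
qed (auto simp: Ind_def)

lemma int_psi_Ind2:
  fixes \<psi> :: "('p \<Rightarrow> real) \<times> real \<Rightarrow> real"
  assumes psi: "integrable (Nm :: (('p \<Rightarrow> real) \<times> real) measure) \<psi>"
  shows "integrable (M \<Otimes>\<^sub>M (Nm :: (('p \<Rightarrow> real) \<times> real) measure)) (\<lambda>(y,w). \<psi> w * Ind w y)"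
proof -
  interpret P: pair_sigma_finite M "Nm :: (('p \<Rightarrow> real) \<times> real) measure" by (rule psf_M_Nm)
  have [measurable]: "\<psi> \<in> borel_measurable Nm" using psi by auto
  have "(\<integral>\<^sup>+z. ennreal (norm ((\<lambda>(y,w). \<psi> w * Ind w y) z)) \<partial>(M \<Otimes>\<^sub>M Nm)) \<le> (\<integral>\<^sup>+z. ennreal (norm (\<psi> (snd z))) \<partial>(M \<Otimes>\<^sub>M (Nm :: (('p \<Rightarrow> real) \<times> real) measure)))"
    by (intro nn_integral_mono) (auto simp: Ind_def)
  also have "\<dots> = (\<integral>\<^sup>+y. \<integral>\<^sup>+w. ennreal (norm (\<psi> w)) \<partial>(Nm :: (('p \<Rightarrow> real) \<times> real) measure) \<partial>M)"
    by (subst P.M2.nn_integral_fst[symmetric]) auto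
  also have "\<dots> = (\<integral>\<^sup>+w. ennreal (norm (\<psi> w)) \<partial>(Nm :: (('p \<Rightarrow> real) \<times> real) measure))"
    by (simp add: emeasure_space_1)
  also have "\<dots> < \<infinity>" using psi by (simp add: integrable_iff_bounded)
  finally show ?thesis by (simp add: integrable_iff_bounded)
qed

lemma test_fun:
  fixes \<psi> :: "('p \<Rightarrow> real) \<times> real \<Rightarrow> real" and xs :: "nat \<Rightarrow> nat \<Rightarrow> real^'p"
  assumes psi: "integrable (Nm :: (('p \<Rightarrow> real) \<times> real) measure) \<psi>"
    and psi2: "integrable (Nm :: (('p \<Rightarrow> real) \<times> real) measure) (\<lambda>w. (\<psi> w)\<^sup>2)"
    and Qi: "\<And>n. n \<ge> 1 \<Longrightarrow> integrable (Nm :: (('p \<Rightarrow> real) \<times> real) measure) (\<lambda>w. ((\<Sum>i<n. Ind w (xs n i)) / real n - G w)\<^sup>2)"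
    and Q: "(\<lambda>n. \<integral>w. ((\<Sum>i<n. Ind w (xs n i)) / real n - G w)\<^sup>2 \<partial>(Nm :: (('p \<Rightarrow> real) \<times> real) measure)) \<longlonglongrightarrow> 0"
  defines "H \<equiv> \<lambda>x. \<integral>w. \<psi> w * Ind w x \<partial>(Nm :: (('p \<Rightarrow> real) \<times> real) measure)"
  shows "(\<lambda>n. (\<Sum>i<n. H (xs n i)) / real n) \<longlonglongrightarrow> (\<integral>y. H y \<partial>M)"
proof -
  interpret P: pair_sigma_finite M "Nm :: (('p \<Rightarrow> real) \<times> real) measure" by (rule psf_M_Nm)
  have [measurable]: "\<psi> \<in> borel_measurable Nm" using psi by auto
  define D where "D n w = (\<Sum>i<n. Ind w (xs n i)) / real n - G w" for n w
  have Dle: "\<bar>D n w\<bar> \<le> 1" if "n \<ge> 1" for n w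
  proof -
    have "(\<Sum>i<n. Ind w (xs n i)) \<le> (\<Sum>i<n. 1)" by (intro sum_mono) (simp add: Ind_bounds)
    moreover have "0 \<le> (\<Sum>i<n. Ind w (xs n i))" by (intro sum_nonneg) (simp add: Ind_bounds)
    ultimately have "0 \<le> (\<Sum>i<n. Ind w (xs n i)) / real n" "(\<Sum>i<n. Ind w (xs n i)) / real n \<le> 1"
      using that by (auto simp: divide_le_eq)
    then show ?thesis unfolding D_def using G_bounds[of w] by auto
  qed
  have HM: "(\<integral>y. H y \<partial>M) = (\<integral>w. \<psi> w * G w \<partial>(Nm :: (('p \<Rightarrow> real) \<times> real) measure))"
  proof -
    have "(\<integral>y. H y \<partial>M) = (\<integral>w. (\<integral>y. \<psi> w * Ind w y \<partial>M) \<partial>(Nm :: (('p \<Rightarrow> real) \<times> real) measure))"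
      unfolding H_def using P.Fubini_integral[of "\<lambda>y w. \<psi> w * Ind w y"] int_psi_Ind2[OF psi] by simp
    also have "\<dots> = (\<integral>w. \<psi> w * G w \<partial>(Nm :: (('p \<Rightarrow> real) \<times> real) measure))"
      unfolding G_def by simp
    finally show ?thesis .
  qed
  have Hn: "(\<Sum>i<n. H (xs n i)) / real n = (\<integral>w. \<psi> w * ((\<Sum>i<n. Ind w (xs n i)) / real n) \<partial>(Nm :: (('p \<Rightarrow> real) \<times> real) measure))" for n
  proof -
    have "(\<Sum>i<n. H (xs n i)) = (\<integral>w. (\<Sum>i<n. \<psi> w * Ind w (xs n i)) \<partial>(Nm :: (('p \<Rightarrow> real) \<times> real) measure))"
      unfolding H_def by (rule Bochner_Integration.integral_sum[symmetric]) (rule int_psi_Ind[OF psi])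
    then show ?thesis by (simp add: sum_distrib_left[symmetric])
  qed
  have diff: "(\<Sum>i<n. H (xs n i)) / real n - (\<integral>y. H y \<partial>M) = (\<integral>w. \<psi> w * D n w \<partial>(Nm :: (('p \<Rightarrow> real) \<times> real) measure))" for n
  proof -
    have i1: "integrable (Nm :: (('p \<Rightarrow> real) \<times> real) measure) (\<lambda>w. \<psi> w * ((\<Sum>i<n. Ind w (xs n i)) / real n))"
      using Bochner_Integration.integrable_sum[of "{..<n}" Nm "\<lambda>i w. \<psi> w * Ind w (xs n i)", OF int_psi_Ind[OF psi]]
      by (auto simp: sum_distrib_left[symmetric] intro: integrable_divide)
    have i2: "integrable (Nm :: (('p \<Rightarrow> real) \<times> real) measure) (\<lambda>w. \<psi> w * G w)"
      by (rule Bochner_Integration.integrable_bound[OF psi]) (use G_bounds in \<open>auto simp: abs_mult intro!: mult_left_le\<close>)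
    show ?thesis unfolding Hn HM D_def using i1 i2
      by (simp add: right_diff_distrib Bochner_Integration.integral_diff)
  qed
  show ?thesis
  proof (rule LIMSEQ_I)
    fix e :: real assume e: "0 < e"
    define A where "A = (\<integral>w. (\<psi> w)\<^sup>2 \<partial>(Nm :: (('p \<Rightarrow> real) \<times> real) measure))"
    have A0: "0 \<le> A" unfolding A_def by (simp add: integral_nonneg)
    define \<epsilon> where "\<epsilon> = e / (A + 1)"
    have \<epsilon>: "0 < \<epsilon>" unfolding \<epsilon>_def using e A0 by auto
    have "\<forall>\<^sub>F n in sequentially. (\<integral>w. (D n w)\<^sup>2 \<partial>(Nm :: (('p \<Rightarrow> real) \<times> real) measure)) < e * \<epsilon>"
      using Q[unfolded D_def[symmetric]] e \<epsilon> by (simp add: order_tendsto_iff)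
    moreover have "\<forall>\<^sub>F n in sequentially. n \<ge> 1" by (rule eventually_ge_at_top)
    ultimately have "\<forall>\<^sub>F n in sequentially. norm ((\<Sum>i<n. H (xs n i)) / real n - (\<integral>y. H y \<partial>M)) < e"
    proof eventually_elim
      case (elim n)
      have iD: "integrable (Nm :: (('p \<Rightarrow> real) \<times> real) measure) (\<lambda>w. (D n w)\<^sup>2)"
        unfolding D_def using Qi[OF elim(2)] .
      have iPD: "integrable (Nm :: (('p \<Rightarrow> real) \<times> real) measure) (\<lambda>w. \<psi> w * D n w)"
        by (rule Bochner_Integration.integrable_bound[OF psi])
          (use Dle[OF elim(2)] in \<open>auto simp: abs_mult intro!: mult_left_le\<close>, simp add: D_def)
      have pt: "\<bar>\<psi> w * D n w\<bar> \<le> (\<epsilon> * (\<psi> w)\<^sup>2 + (D n w)\<^sup>2 / \<epsilon>) / 2" for w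
      proof -
        have "0 \<le> (\<epsilon> * \<bar>\<psi> w\<bar> - \<bar>D n w\<bar>)\<^sup>2" by simp
        then have "2 * \<epsilon> * \<bar>\<psi> w * D n w\<bar> \<le> \<epsilon>\<^sup>2 * (\<psi> w)\<^sup>2 + (D n w)\<^sup>2"
          by (simp add: power2_eq_square algebra_simps abs_mult)
        then show ?thesis using \<epsilon> by (simp add: field_simps power2_eq_square)
      qed
      have "norm ((\<Sum>i<n. H (xs n i)) / real n - (\<integral>y. H y \<partial>M)) = \<bar>\<integral>w. \<psi> w * D n w \<partial>Nm\<bar>"
        by (simp add: diff)
      also have "\<dots> \<le> (\<integral>w. \<bar>\<psi> w * D n w\<bar> \<partial>(Nm :: (('p \<Rightarrow> real) \<times> real) measure))"
        by (rule integral_abs_bound)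
      also have "\<dots> \<le> (\<integral>w. (\<epsilon> * (\<psi> w)\<^sup>2 + (D n w)\<^sup>2 / \<epsilon>) / 2 \<partial>(Nm :: (('p \<Rightarrow> real) \<times> real) measure))"
        using iPD psi2 iD by (intro integral_mono pt) auto
      also have "\<dots> = (\<epsilon> * A + (\<integral>w. (D n w)\<^sup>2 \<partial>Nm) / \<epsilon>) / 2"
        using psi2 iD unfolding A_def by simp
      also have "\<dots> < (e + e) / 2"
      proof -
        have "\<epsilon> * A < e" unfolding \<epsilon>_def using e A0 by (simp add: field_simps)
        moreover have "(\<integral>w. (D n w)\<^sup>2 \<partial>Nm) / \<epsilon> < e" using elim(1) \<epsilon> by (simp add: divide_less_eq)
        ultimately show ?thesis by simp
      qed
      finally show ?case by simp
    qed
    then show "\<exists>no. \<forall>n\<ge>no. norm ((\<Sum>i<n. H (xs n i)) / real n - (\<integral>y. H y \<partial>M)) < e"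
      by (simp add: eventually_sequentially)
  qed
qed

end

lemma K_eval:
  fixes f F :: "real \<Rightarrow> real"
  assumes L: "0 \<le> L" and F: "\<And>r. (F has_real_derivative f r) (at r)" and f: "continuous_on UNIV f"
  shows "(\<integral>r. (f r * indicator {-L..L} r) * indicator {s..} r \<partial>lborel) =
     (if s \<le> -L then F L - F (-L) else if s \<le> L then F L - F s else 0)"
proof -
  have ftc: "(\<integral>r. indicator {a..L} r *\<^sub>R f r \<partial>lborel) = F L - F a" if "a \<le> L" for a
  proof (rule integral_FTC_atLeastAtMost[OF that])
    show "(F has_vector_derivative f x) (at x within {a..L})" for x
      using F[of x] by (simp add: has_real_derivative_iff_has_vector_derivative[symmetric] has_field_derivative_at_within)
    show "continuous_on {a..L} f" using f by (rule continuous_on_subset) auto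
  qed
  show ?thesis
  proof (cases "s \<le> L")
    case True
    have "(\<lambda>r. (f r * indicator {-L..L} r) * indicator {s..} r) = (\<lambda>r. indicator {max s (-L)..L} r *\<^sub>R f r)"
      by (auto simp: indicator_def fun_eq_iff)
    then show ?thesis using True ftc[of "max s (-L)"] L by (auto simp: max_def)
  next
    case False
    then have "(\<lambda>r. (f r * indicator {-L..L} r) * indicator {s..} r) = (\<lambda>r. 0)"
      by (auto simp: indicator_def fun_eq_iff)
    then show ?thesis using False L by auto
  qed
qed

definition Kc :: "real \<Rightarrow> real \<Rightarrow> real" where "Kc L s = (if \<bar>s\<bar> \<le> L then cos s - 1 else 0)"
definition Ks :: "real \<Rightarrow> real \<Rightarrow> real" where "Ks L s = (if \<bar>s\<bar> \<le> L then sin s else 0)"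

lemma K_cos:
  assumes "L = 2 * pi * real m"
  shows "(\<integral>r. (sin r * indicator {-L..L} r) * indicator {s..} r \<partial>lborel) = Kc L s"
proof -
  have L0: "0 \<le> L" using assms by simp
  have cL: "cos L = 1" using assms cos_int_2pin[of "int m"] by simp
  have "(\<integral>r. (sin r * indicator {-L..L} r) * indicator {s..} r \<partial>lborel) =
     (if s \<le> -L then - cos L - - cos (-L) else if s \<le> L then - cos L - - cos s else 0)"
    by (rule K_eval[OF L0]) (auto intro!: derivative_eq_intros continuous_intros)
  then show ?thesis using cL L0 by (cases "s = -L") (auto simp: Kc_def)
qed

lemma K_sin:
  assumes "L = 2 * pi * real m"
  shows "(\<integral>r. (- cos r * indicator {-L..L} r) * indicator {s..} r \<partial>lborel) = Ks L s"
proof -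
  have L0: "0 \<le> L" using assms by simp
  have sL: "sin L = 0" using assms sin_int_2pin[of "int m"] by simp
  have "(\<integral>r. (- cos r * indicator {-L..L} r) * indicator {s..} r \<partial>lborel) =
     (if s \<le> -L then - sin L - - sin (-L) else if s \<le> L then - sin L - - sin s else 0)"
    by (rule K_eval[OF L0]) (auto intro!: derivative_eq_intros continuous_intros)
  then show ?thesis using sL L0 by (cases "s = -L") (auto simp: Ks_def)
qed

lemma K_tight:
  fixes R s :: real
  assumes "0 < R"
  shows "(\<integral>r. (- r * indicator {-R..R} r) * indicator {s..} r \<partial>lborel) = (if \<bar>s\<bar> \<le> R then - (R\<^sup>2 - s\<^sup>2) / 2 else 0)"
proof -
  have "(\<integral>r. (- r * indicator {-R..R} r) * indicator {s..} r \<partial>lborel) =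
     (if s \<le> -R then - R\<^sup>2/2 - - (-R)\<^sup>2/2 else if s \<le> R then - R\<^sup>2/2 - - s\<^sup>2/2 else 0)"
    by (rule K_eval) (use assms in \<open>auto intro!: derivative_eq_intros continuous_intros\<close>)
  then show ?thesis using assms by (cases "s = -R") (auto simp: field_simps)
qed

context ED begin

lemma prod_int:
  fixes \<phi> :: "('p \<Rightarrow> real) \<Rightarrow> real" and k :: "real \<Rightarrow> real"
  assumes [measurable]: "\<phi> \<in> borel_measurable Gam" and phi: "\<And>\<theta>. \<bar>\<phi> \<theta>\<bar> \<le> 1" and k: "integrable lborel k"
  shows "integrable (Nm :: (('p \<Rightarrow> real) \<times> real) measure) (\<lambda>w. \<phi> (fst w) * k (snd w))"
proof -
  have [measurable]: "k \<in> borel_measurable borel" using k by auto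
  have "(\<integral>\<^sup>+w. ennreal (norm (\<phi> (fst w) * k (snd w))) \<partial>(Nm :: (('p \<Rightarrow> real) \<times> real) measure))
     \<le> (\<integral>\<^sup>+w. ennreal (norm (k (snd w))) \<partial>((Gam :: ('p \<Rightarrow> real) measure) \<Otimes>\<^sub>M lborel))"
    unfolding Nm_def by (intro nn_integral_mono ennreal_leI) (simp add: abs_mult mult_left_le_one_le phi)
  also have "\<dots> = (\<integral>\<^sup>+\<theta>. \<integral>\<^sup>+r. ennreal (norm (k r)) \<partial>lborel \<partial>(Gam :: ('p \<Rightarrow> real) measure))"
  proof -
    have m: "(\<lambda>w. ennreal (norm (k (snd w)))) \<in> borel_measurable ((Gam :: ('p \<Rightarrow> real) measure) \<Otimes>\<^sub>M lborel)"
      by measurable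
    show ?thesis using sigma_finite_measure.nn_integral_fst[OF lborel.sigma_finite_measure_axioms m] by simp
  qed
  also have "\<dots> = (\<integral>\<^sup>+r. ennreal (norm (k r)) \<partial>lborel)"
  proof -
    have "emeasure (Gam :: ('p \<Rightarrow> real) measure) UNIV = 1"
      using prob_space.emeasure_space_1[OF prob_space_Gam] by simp
    then show ?thesis by simp
  qed
  also have "\<dots> < \<infinity>" using k by (simp add: integrable_iff_bounded)
  finally show ?thesis by (simp add: integrable_iff_bounded Nm_def)
qed

lemma H_prod:
  fixes \<phi> :: "('p \<Rightarrow> real) \<Rightarrow> real" and k :: "real \<Rightarrow> real"
  assumes [measurable]: "\<phi> \<in> borel_measurable Gam" and phi: "\<And>\<theta>. \<bar>\<phi> \<theta>\<bar> \<le> 1" and k: "integrable lborel k"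
  shows "(\<integral>w. \<phi> (fst w) * k (snd w) * Ind w x \<partial>(Nm :: (('p \<Rightarrow> real) \<times> real) measure))
     = (\<integral>\<theta>. \<phi> \<theta> * (\<integral>r. k r * indicator {ip \<theta> x..} r \<partial>lborel) \<partial>Gam)"
proof -
  interpret P: pair_sigma_finite "Gam :: ('p \<Rightarrow> real) measure" lborel by (rule psf_Gam_lborel)
  have i: "integrable (Gam \<Otimes>\<^sub>M lborel) (\<lambda>w. \<phi> (fst w) * k (snd w) * Ind w x)"
    using int_psi_Ind[OF prod_int[OF assms], of x] unfolding Nm_def by simp
  have "(\<integral>w. \<phi> (fst w) * k (snd w) * Ind w x \<partial>(Nm :: (('p \<Rightarrow> real) \<times> real) measure))
     = (\<integral>\<theta>. (\<integral>r. \<phi> \<theta> * k r * Ind (\<theta>, r) x \<partial>lborel) \<partial>Gam)"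
    unfolding Nm_def using P.integral_fst'[OF i] by simp
  also have "\<dots> = (\<integral>\<theta>. \<phi> \<theta> * (\<integral>r. k r * indicator {ip \<theta> x..} r \<partial>lborel) \<partial>Gam)"
  proof (intro Bochner_Integration.integral_cong refl)
    fix \<theta>
    have "(\<lambda>r. \<phi> \<theta> * k r * Ind (\<theta>, r) x) = (\<lambda>r. \<phi> \<theta> * (k r * indicator {ip \<theta> x..} r))"
      by (auto simp: Ind_def indicator_def fun_eq_iff)
    then show "(\<integral>r. \<phi> \<theta> * k r * Ind (\<theta>, r) x \<partial>lborel) = \<phi> \<theta> * (\<integral>r. k r * indicator {ip \<theta> x..} r \<partial>lborel)"
      by simp
  qed
  finally show ?thesis .
qed

end

locale ED2 = ED M for M :: "(real^'p::finite) measure" +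
  fixes xs :: "nat \<Rightarrow> nat \<Rightarrow> real^'p"
  assumes Qi: "\<And>n. n \<ge> 1 \<Longrightarrow> integrable (Nm :: (('p \<Rightarrow> real) \<times> real) measure) (\<lambda>w. ((\<Sum>i<n. Ind w (xs n i)) / real n - G w)\<^sup>2)"
    and Q: "(\<lambda>n. \<integral>w. ((\<Sum>i<n. Ind w (xs n i)) / real n - G w)\<^sup>2 \<partial>(Nm :: (('p \<Rightarrow> real) \<times> real) measure)) \<longlonglongrightarrow> 0"
begin

definition conv :: "(real^'p \<Rightarrow> real) \<Rightarrow> bool" where
  "conv f \<longleftrightarrow> integrable M f \<and> (\<lambda>n. (\<Sum>i<n. f (xs n i)) / real n) \<longlonglongrightarrow> (\<integral>y. f y \<partial>M)"

lemma conv_prod: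
  fixes \<phi> :: "('p \<Rightarrow> real) \<Rightarrow> real" and f :: "real \<Rightarrow> real"
  assumes [measurable]: "\<phi> \<in> borel_measurable Gam" and phi: "\<And>\<theta>. \<bar>\<phi> \<theta>\<bar> \<le> 1" and f: "continuous_on UNIV f"
  shows "conv (\<lambda>x. \<integral>\<theta>. \<phi> \<theta> * (\<integral>r. (f r * indicator {-L..L} r) * indicator {ip \<theta> x..} r \<partial>lborel) \<partial>Gam)"
proof -
  interpret P: pair_sigma_finite M "Nm :: (('p \<Rightarrow> real) \<times> real) measure" by (rule psf_M_Nm)
  define k where "k r = f r * indicator {-L..L} r" for r
  have k: "integrable lborel k" unfolding k_def
    using f by (intro borel_integrable_atLeastAtMost) (simp add: continuous_on_eq_continuous_at)
  have k2: "integrable lborel (\<lambda>r. (k r)\<^sup>2)"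
  proof -
    have "(\<lambda>r. (k r)\<^sup>2) = (\<lambda>r. (f r)\<^sup>2 * indicator {-L..L} r)" by (auto simp: k_def indicator_def fun_eq_iff)
    moreover have "integrable lborel (\<lambda>r. (f r)\<^sup>2 * indicator {-L..L} r)"
      using f by (intro borel_integrable_atLeastAtMost) (auto simp: continuous_on_eq_continuous_at intro!: continuous_intros)
    ultimately show ?thesis by simp
  qed
  define \<psi> where "\<psi> w = \<phi> (fst w) * k (snd w)" for w
  have psi: "integrable (Nm :: (('p \<Rightarrow> real) \<times> real) measure) \<psi>"
    unfolding \<psi>_def by (rule prod_int[OF assms(1) phi k])
  have psi2: "integrable (Nm :: (('p \<Rightarrow> real) \<times> real) measure) (\<lambda>w. (\<psi> w)\<^sup>2)"
  proof -
    have "integrable (Nm :: (('p \<Rightarrow> real) \<times> real) measure) (\<lambda>w. (\<phi> (fst w))\<^sup>2 * (k (snd w))\<^sup>2)"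
      using phi by (intro prod_int k2) (auto simp: abs_square_le_1)
    then show ?thesis unfolding \<psi>_def by (simp add: power_mult_distrib)
  qed
  define H where "H x = (\<integral>w. \<psi> w * Ind w x \<partial>(Nm :: (('p \<Rightarrow> real) \<times> real) measure))" for x
  have Heq: "H = (\<lambda>x. \<integral>\<theta>. \<phi> \<theta> * (\<integral>r. (f r * indicator {-L..L} r) * indicator {ip \<theta> x..} r \<partial>lborel) \<partial>Gam)"
    unfolding H_def \<psi>_def using H_prod[OF assms(1) phi k] by (auto simp: k_def fun_eq_iff)
  have "integrable M H"
    unfolding H_def using P.integrable_fst[OF int_psi_Ind2[OF psi]] by simp
  moreover have "(\<lambda>n. (\<Sum>i<n. H (xs n i)) / real n) \<longlonglongrightarrow> (\<integral>y. H y \<partial>M)"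
    unfolding H_def by (rule test_fun[OF psi psi2 Qi Q])
  ultimately show ?thesis unfolding conv_def Heq by simp
qed

end

definition TR :: "real \<Rightarrow> real^'p::finite \<Rightarrow> real" where
  "TR R x = (\<integral>\<theta>. max 0 (1 - (ip \<theta> x)\<^sup>2 / R\<^sup>2) \<partial>(Gam :: ('p \<Rightarrow> real) measure))"

lemma ip_zero[simp]: "ip \<theta> 0 = 0" by (simp add: ip_def)

lemma TR_int: "integrable (Gam :: ('p::finite \<Rightarrow> real) measure) (\<lambda>\<theta>. max 0 (1 - (ip \<theta> x)\<^sup>2 / R\<^sup>2))"
proof -
  interpret prob_space "Gam :: ('p \<Rightarrow> real) measure" by (rule prob_space_Gam)
  show ?thesis
    by (rule integrable_const_bound[where B=1]) (auto simp: max_def divide_nonneg_nonneg)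
qed

lemma hl: "0 \<le> (c::real) \<Longrightarrow> 0 \<le> q \<Longrightarrow> \<bar>c * max 0 (1 - q)\<bar> \<le> \<bar>c\<bar>"
  by (cases "q \<le> 1") (auto simp: abs_mult max_def mult_right_le_one_le)

lemma hl2: "0 \<le> (c::real) \<Longrightarrow> 0 \<le> q \<Longrightarrow> c * max 0 (1 - q) \<le> c"
  by (cases "q \<le> 1") (auto simp: max_def mult_right_le_one_le)

lemma TR_bounds:
  fixes x :: "real^'p::finite"
  shows "0 \<le> TR R x" "TR R x \<le> 1"
proof -
  interpret prob_space "Gam :: ('p::finite \<Rightarrow> real) measure" by (rule prob_space_Gam)
  show "0 \<le> TR R x" unfolding TR_def by (simp add: integral_nonneg)
  have "TR R x \<le> (\<integral>\<theta>. 1 \<partial>(Gam :: ('p \<Rightarrow> real) measure))"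
    unfolding TR_def by (rule integral_mono[OF TR_int]) (auto simp: max_def divide_nonneg_nonneg)
  then show "TR R x \<le> 1" using prob_space by simp
qed

lemma TR_formula:
  assumes "x \<noteq> 0"
  shows "TR R x = (\<integral>u. std_normal_density u * max 0 (1 - (norm x * u)\<^sup>2 / R\<^sup>2) \<partial>lborel)"
  unfolding TR_def by (rule Gam_integral[OF assms]) auto

lemma std_le_half: "std_normal_density u \<le> 1/2"
proof -
  have "exp (- u\<^sup>2 / 2) \<le> 1" by simp
  moreover have "1 / sqrt (2 * pi) \<le> 1 / 2"
  proof -
    have "2 \<le> sqrt (2 * pi)" using pi_gt3 by (simp add: real_le_rsqrt)
    then show ?thesis by (simp add: divide_le_eq)
  qed
  ultimately show ?thesis unfolding std_normal_density_def
    by (smt (verit) divide_nonneg_nonneg exp_gt_zero mult_le_one mult_right_le_one_le real_sqrt_ge_zero pi_ge_zero)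
qed

lemma TR_lower:
  fixes x :: "real^'p::finite"
  assumes R: "0 < R"
  shows "1 - norm x / R \<le> TR R x"
proof (cases "x = 0")
  case True
  have "measure (Gam :: ('p \<Rightarrow> real) measure) UNIV = 1"
    using prob_space.prob_space[OF prob_space_Gam] by simp
  then show ?thesis using True by (simp add: TR_def)
next
  case False
  have i1: "integrable lborel (\<lambda>u. std_normal_density u * max 0 (1 - (norm x * u)\<^sup>2 / R\<^sup>2))"
  proof (rule Bochner_Integration.integrable_bound[of _ std_normal_density])
    show "integrable lborel std_normal_density" by simp
  qed (auto intro!: AE_I2 hl hl2)
  have i2: "integrable lborel (\<lambda>u. std_normal_density u * (1 - (norm x)\<^sup>2 / R\<^sup>2 * u\<^sup>2))"
  proof -
    have "integrable lborel (\<lambda>u. std_normal_density u - ((norm x)\<^sup>2 / R\<^sup>2) * (std_normal_density u * u^2))"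
      using integrable_std_normal_moment[of 2] by auto
    then show ?thesis by (simp add: algebra_simps)
  qed
  have "1 - (norm x)\<^sup>2 / R\<^sup>2 = (\<integral>u. std_normal_density u * (1 - (norm x)\<^sup>2 / R\<^sup>2 * u\<^sup>2) \<partial>lborel)"
  proof -
    have "(\<integral>u. std_normal_density u * (1 - (norm x)\<^sup>2 / R\<^sup>2 * u\<^sup>2) \<partial>lborel)
        = (\<integral>u. std_normal_density u - ((norm x)\<^sup>2 / R\<^sup>2) * (std_normal_density u * u^(2*1)) \<partial>lborel)"
      by (rule arg_cong[where f="integral\<^sup>L lborel"]) (simp add: fun_eq_iff algebra_simps power2_eq_square)
    also have "\<dots> = 1 - (norm x)\<^sup>2 / R\<^sup>2"
      using integrable_std_normal_moment[of 2] integral_std_normal_moment_even[of 1] by simp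
    finally show ?thesis by simp
  qed
  also have "\<dots> \<le> TR R x"
    unfolding TR_formula[OF False] using i1 i2
    by (intro integral_mono) (auto simp: power_mult_distrib intro!: mult_left_mono)
  finally have a: "1 - (norm x)\<^sup>2 / R\<^sup>2 \<le> TR R x" .
  show ?thesis
  proof (cases "norm x / R \<le> 1")
    case True
    have "(norm x / R) * (norm x / R) \<le> norm x / R"
      by (rule mult_right_le_one_le) (use True R in auto)
    then have "(norm x / R)\<^sup>2 \<le> norm x / R" by (simp add: power2_eq_square)
    then show ?thesis using a by (simp add: power_divide)
  next
    case False then show ?thesis using TR_bounds(1)[of R x] by simp
  qed
qed

lemma TR_upper:
  fixes x :: "real^'p::finite"
  assumes R: "0 < R" and x: "x \<noteq> 0"
  shows "TR R x \<le> R / norm x"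
proof -
  define t where "t = R / norm x"
  have t: "0 < t" using R x by (simp add: t_def)
  have i1: "integrable lborel (\<lambda>u. std_normal_density u * max 0 (1 - (norm x * u)\<^sup>2 / R\<^sup>2))"
  proof (rule Bochner_Integration.integrable_bound[of _ std_normal_density])
    show "integrable lborel std_normal_density" by simp
  qed (auto intro!: AE_I2 hl hl2)
  have pt: "max 0 (1 - (norm x * u)\<^sup>2 / R\<^sup>2) \<le> indicator {-t..t} u" for u
  proof (cases "\<bar>u\<bar> \<le> t")
    case True then show ?thesis using R by (auto simp: indicator_def max_def divide_nonneg_nonneg)
  next
    case False
    then have "R < norm x * \<bar>u\<bar>" using x R by (auto simp: t_def field_simps)
    then have "R\<^sup>2 < (norm x * \<bar>u\<bar>)\<^sup>2" using R by (intro power_strict_mono) auto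
    then have "R\<^sup>2 < (norm x * u)\<^sup>2" by (simp add: power_mult_distrib)
    then have "1 < (norm x * u)\<^sup>2 / R\<^sup>2" using R by (simp add: less_divide_eq)
    then show ?thesis using False by (auto simp: indicator_def max_def)
  qed
  have "TR R x \<le> (\<integral>u. (1/2) * indicator {-t..t} u \<partial>lborel)"
    unfolding TR_formula[OF x] using i1
  proof (intro integral_mono)
    show "integrable lborel (\<lambda>u. 1 / 2 * indicat_real {- t..t} u)"
      by (intro integrable_mult_right) (simp add: integrable_indicator_iff emeasure_lborel_Icc_eq)
    fix u
    have "std_normal_density u * max 0 (1 - (norm x * u)\<^sup>2 / R\<^sup>2) \<le> std_normal_density u * indicator {-t..t} u"
      by (intro mult_left_mono pt) simp
    also have "\<dots> \<le> (1/2) * indicator {-t..t} u"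
      by (intro mult_right_mono std_le_half) simp
    finally show "std_normal_density u * max 0 (1 - (norm x * u)\<^sup>2 / R\<^sup>2) \<le> 1 / 2 * indicat_real {- t..t} u" .
  qed
  also have "\<dots> = t" using t by simp
  finally show ?thesis by (simp add: t_def)
qed

context ED2 begin

lemma conv_cong: "(\<And>x. f x = g x) \<Longrightarrow> conv f \<Longrightarrow> conv g"
proof -
  assume "\<And>x. f x = g x" then have "f = g" by auto
  then show "conv f \<Longrightarrow> conv g" by simp
qed

lemma conv_add: "conv f \<Longrightarrow> conv g \<Longrightarrow> conv (\<lambda>x. f x + g x)"
  unfolding conv_def by (auto simp: sum.distrib add_divide_distrib intro: tendsto_add)

lemma conv_cmult: "conv f \<Longrightarrow> conv (\<lambda>x. c * f x)"
proof -
  assume "conv f"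
  then have i: "integrable M f" and t: "(\<lambda>n. (\<Sum>i<n. f (xs n i)) / real n) \<longlonglongrightarrow> (\<integral>y. f y \<partial>M)"
    unfolding conv_def by auto
  have "(\<lambda>n. c * ((\<Sum>i<n. f (xs n i)) / real n)) \<longlonglongrightarrow> c * (\<integral>y. f y \<partial>M)"
    by (rule tendsto_mult_left[OF t])
  moreover have "(\<lambda>n. c * ((\<Sum>i<n. f (xs n i)) / real n)) = (\<lambda>n. (\<Sum>i<n. c * f (xs n i)) / real n)"
    by (simp add: sum_distrib_left)
  ultimately show ?thesis using i unfolding conv_def by simp
qed

lemma conv_const: "conv (\<lambda>x. c)"
proof -
  have "\<forall>\<^sub>F n in sequentially. c = (\<Sum>i<n. c) / real n"
    using eventually_ge_at_top[of "1::nat"] by eventually_elim simp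
  from Lim_transform_eventually[OF tendsto_const this]
  have "(\<lambda>n. (\<Sum>i<n. c) / real n) \<longlonglongrightarrow> c" .
  then show ?thesis unfolding conv_def using prob_space by simp
qed

lemma conv_TR: "0 < R \<Longrightarrow> conv (TR R)"
proof -
  assume R: "0 < R"
  have c: "conv (\<lambda>x. \<integral>\<theta>. 1 * (\<integral>r. (- r * indicator {-R..R} r) * indicator {ip \<theta> x..} r \<partial>lborel) \<partial>(Gam :: ('p \<Rightarrow> real) measure))"
    by (rule conv_prod) (auto intro: continuous_intros)
  have eq: "(\<integral>\<theta>. 1 * (\<integral>r. (- r * indicator {-R..R} r) * indicator {ip \<theta> x..} r \<partial>lborel) \<partial>(Gam :: ('p \<Rightarrow> real) measure))
      = - (R\<^sup>2 / 2) * TR R x" for x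
  proof -
    have "\<And>s. (if \<bar>s\<bar> \<le> R then - (R\<^sup>2 - s\<^sup>2) / 2 else 0) = - (R\<^sup>2 / 2) * max 0 (1 - s\<^sup>2 / R\<^sup>2)"
    proof -
      fix s :: real
      show "(if \<bar>s\<bar> \<le> R then - (R\<^sup>2 - s\<^sup>2) / 2 else 0) = - (R\<^sup>2 / 2) * max 0 (1 - s\<^sup>2 / R\<^sup>2)"
      proof (cases "\<bar>s\<bar> \<le> R")
        case True
        then have "s\<^sup>2 \<le> R\<^sup>2" using R by (metis abs_le_square_iff abs_of_pos)
        then have "0 \<le> 1 - s\<^sup>2 / R\<^sup>2" using R by (simp add: divide_le_eq)
        then show ?thesis using True R by (simp add: field_simps)
      next
        case False
        then have "R\<^sup>2 < s\<^sup>2" using R by (metis abs_le_square_iff abs_of_pos not_le)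
        then have "1 - s\<^sup>2 / R\<^sup>2 < 0" using R by (simp add: less_divide_eq)
        then show ?thesis using False by simp
      qed
    qed
    then show ?thesis unfolding TR_def K_tight[OF R] by simp
  qed
  have "conv (\<lambda>x. (- 2 / R\<^sup>2) * (- (R\<^sup>2 / 2) * TR R x))"
    using conv_cmult[OF c[unfolded eq]] .
  then show ?thesis by (rule conv_cong[rotated]) (use R in simp)
qed

lemma int_ind: "integrable M (\<lambda>x. indicator {x. \<rho> < norm x} x :: real)"
  by (rule integrable_const_bound[where B=1]) auto

lemma tight:
  assumes e: "0 < \<epsilon>"
  shows "\<exists>\<rho>>0. (\<integral>x. indicator {x. \<rho> < norm x} x \<partial>M) \<le> 3 * \<epsilon> \<and>
     (\<forall>\<^sub>F n in sequentially. (\<Sum>i<n. indicator {x. \<rho> < norm x} (xs n i)) / real n \<le> 3 * \<epsilon>)"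
proof -
  define m1 where "m1 = (\<integral>x. norm x \<partial>M)"
  have m1: "0 \<le> m1" unfolding m1_def by (simp add: integral_nonneg)
  define R where "R = m1 / \<epsilon> + 1"
  have R: "0 < R" unfolding R_def using divide_nonneg_pos[OF m1 e] by linarith
  have mR: "m1 / R \<le> \<epsilon>" unfolding R_def using m1 e by (simp add: divide_le_eq field_simps)
  define \<rho> where "\<rho> = R / \<epsilon>"
  have \<rho>: "0 < \<rho>" unfolding \<rho>_def using R e by simp
  have pt: "indicator {x. \<rho> < norm x} x \<le> 1 - TR R x + \<epsilon>" for x :: "real^'p"
  proof (cases "\<rho> < norm x")
    case True
    then have x: "x \<noteq> 0" using \<rho> by auto
    have "TR R x \<le> R / norm x" by (rule TR_upper[OF R x])
    also have "\<dots> \<le> R / \<rho>"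
    proof -
      have "0 < norm x" using True \<rho> by linarith
      then have "0 < norm x * \<rho>" using \<rho> by (rule mult_pos_pos)
      then show ?thesis using True R \<rho> by (intro divide_left_mono) auto
    qed
    also have "\<dots> = \<epsilon>" unfolding \<rho>_def using R e by simp
    finally show ?thesis using True by simp
  next
    case False then show ?thesis using TR_bounds(2)[of R x] e by simp
  qed
  have cT: "conv (TR R)" by (rule conv_TR[OF R])
  have iT: "integrable M (TR R)" using cT unfolding conv_def by simp
  have lowM: "1 - \<epsilon> \<le> (\<integral>x. TR R x \<partial>M)"
  proof -
    have "(\<integral>x. 1 - norm x / R \<partial>M) \<le> (\<integral>x. TR R x \<partial>M)"
      using int_norm iT by (intro integral_mono TR_lower[OF R]) auto
    moreover have "(\<integral>x. 1 - norm x / R \<partial>M) = 1 - m1 / R"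
      using int_norm unfolding m1_def by (simp add: prob_space)
    ultimately show ?thesis using mR by simp
  qed
  have "(\<integral>x. indicator {x. \<rho> < norm x} x \<partial>M) \<le> (\<integral>x. 1 - TR R x + \<epsilon> \<partial>M)"
    using int_ind iT by (intro integral_mono pt) auto
  also have "\<dots> = 1 - (\<integral>x. TR R x \<partial>M) + \<epsilon>" using iT by (simp add: prob_space)
  also have "\<dots> \<le> 3 * \<epsilon>" using lowM e by simp
  finally have A: "(\<integral>x. indicator {x. \<rho> < norm x} x \<partial>M) \<le> 3 * \<epsilon>" .
  have "\<forall>\<^sub>F n in sequentially. dist ((\<Sum>i<n. TR R (xs n i)) / real n) (\<integral>x. TR R x \<partial>M) < \<epsilon>"
    using cT e unfolding conv_def by (auto simp: tendsto_iff)
  moreover have "\<forall>\<^sub>F n in sequentially. n \<ge> 1" by (rule eventually_ge_at_top)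
  ultimately have B: "\<forall>\<^sub>F n in sequentially. (\<Sum>i<n. indicator {x. \<rho> < norm x} (xs n i)) / real n \<le> 3 * \<epsilon>"
  proof eventually_elim
    case (elim n)
    have "(\<Sum>i<n. indicator {x. \<rho> < norm x} (xs n i)) / real n \<le> (\<Sum>i<n. 1 - TR R (xs n i) + \<epsilon>) / real n"
      by (intro divide_right_mono sum_mono pt) auto
    also have "\<dots> = 1 + \<epsilon> - (\<Sum>i<n. TR R (xs n i)) / real n"
      using elim(2) by (simp add: sum.distrib sum_subtractf field_simps)
    also have "\<dots> \<le> 3 * \<epsilon>" using elim(1) lowM by (simp add: dist_real_def abs_less_iff)
    finally show ?case .
  qed
  show ?thesis using A B \<rho> by blast
qed

lemma conv_approx:
  fixes f :: "real^'p \<Rightarrow> real"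
  assumes fint: "integrable M f" and fB: "\<And>x. \<bar>f x\<bar> \<le> B"
    and approx: "\<And>\<epsilon> \<rho>. 0 < \<epsilon> \<Longrightarrow> \<exists>g. conv g \<and> (\<forall>x. \<bar>g x\<bar> \<le> B) \<and> (\<forall>x. norm x \<le> \<rho> \<longrightarrow> \<bar>g x - f x\<bar> \<le> \<epsilon>)"
  shows "conv f"
proof -
  have B: "0 \<le> B" using fB[of 0] by simp
  have "(\<lambda>n. (\<Sum>i<n. f (xs n i)) / real n) \<longlonglongrightarrow> (\<integral>y. f y \<partial>M)"
  proof (rule LIMSEQ_I)
    fix e :: real assume e: "0 < e"
    define \<epsilon> where "\<epsilon> = e / (4 + 12 * B)"
    have \<epsilon>: "0 < \<epsilon>" unfolding \<epsilon>_def using e B by simp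
    obtain \<rho> where \<rho>: "0 < \<rho>" "(\<integral>x. indicator {x. \<rho> < norm x} x \<partial>M) \<le> 3 * \<epsilon>"
      "\<forall>\<^sub>F n in sequentially. (\<Sum>i<n. indicator {x. \<rho> < norm x} (xs n i)) / real n \<le> 3 * \<epsilon>"
      using tight[OF \<epsilon>] by blast
    obtain g where g: "conv g" "\<And>x. \<bar>g x\<bar> \<le> B" "\<And>x. norm x \<le> \<rho> \<Longrightarrow> \<bar>g x - f x\<bar> \<le> \<epsilon>"
      using approx[OF \<epsilon>, of \<rho>] by blast
    have gint: "integrable M g" using g(1) unfolding conv_def by simp
    have pt: "\<bar>f x - g x\<bar> \<le> \<epsilon> + 2 * B * indicator {x. \<rho> < norm x} x" for x
    proof (cases "\<rho> < norm x")
      case True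
      have "\<bar>f x - g x\<bar> \<le> \<bar>f x\<bar> + \<bar>g x\<bar>" by simp
      also have "\<dots> \<le> 2 * B" using fB[of x] g(2)[of x] by simp
      finally show ?thesis using True \<epsilon> by simp
    next
      case False then show ?thesis using g(3)[of x] by (simp add: abs_minus_commute)
    qed
    have I: "\<bar>(\<integral>y. f y \<partial>M) - (\<integral>y. g y \<partial>M)\<bar> \<le> \<epsilon> + 2 * B * (3 * \<epsilon>)"
    proof -
      have "\<bar>(\<integral>y. f y \<partial>M) - (\<integral>y. g y \<partial>M)\<bar> = \<bar>\<integral>y. f y - g y \<partial>M\<bar>" using fint gint by simp
      also have "\<dots> \<le> (\<integral>y. \<bar>f y - g y\<bar> \<partial>M)" by (rule integral_abs_bound)
      also have "\<dots> \<le> (\<integral>y. \<epsilon> + 2 * B * indicator {x. \<rho> < norm x} y \<partial>M)"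
        using fint gint int_ind by (intro integral_mono pt) auto
      also have "\<dots> = \<epsilon> + 2 * B * (\<integral>y. indicator {x. \<rho> < norm x} y \<partial>M)"
        using int_ind by (simp add: prob_space)
      also have "\<dots> \<le> \<epsilon> + 2 * B * (3 * \<epsilon>)" using \<rho>(2) B by (intro add_left_mono mult_left_mono) auto
      finally show ?thesis .
    qed
    have "\<forall>\<^sub>F n in sequentially. dist ((\<Sum>i<n. g (xs n i)) / real n) (\<integral>x. g x \<partial>M) < \<epsilon>"
      using g(1) \<epsilon> unfolding conv_def by (auto simp: tendsto_iff)
    moreover have "\<forall>\<^sub>F n in sequentially. n \<ge> 1" by (rule eventually_ge_at_top)
    ultimately have "\<forall>\<^sub>F n in sequentially. norm ((\<Sum>i<n. f (xs n i)) / real n - (\<integral>y. f y \<partial>M)) < e"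
      using \<rho>(3)
    proof eventually_elim
      case (elim n)
      have "\<bar>(\<Sum>i<n. f (xs n i)) / real n - (\<Sum>i<n. g (xs n i)) / real n\<bar> = \<bar>\<Sum>i<n. f (xs n i) - g (xs n i)\<bar> / real n"
        by (simp add: sum_subtractf diff_divide_distrib[symmetric])
      also have "\<dots> \<le> (\<Sum>i<n. \<bar>f (xs n i) - g (xs n i)\<bar>) / real n"
        by (intro divide_right_mono sum_abs) auto
      also have "\<dots> \<le> (\<Sum>i<n. \<epsilon> + 2 * B * indicator {x. \<rho> < norm x} (xs n i)) / real n"
        by (intro divide_right_mono sum_mono pt) auto
      also have "\<dots> = \<epsilon> + 2 * B * ((\<Sum>i<n. indicator {x. \<rho> < norm x} (xs n i)) / real n)"
        using elim(2) by (simp add: sum.distrib sum_distrib_left[symmetric] field_simps)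
      also have "\<dots> \<le> \<epsilon> + 2 * B * (3 * \<epsilon>)" using elim(3) B by (intro add_left_mono mult_left_mono) auto
      finally have a: "\<bar>(\<Sum>i<n. f (xs n i)) / real n - (\<Sum>i<n. g (xs n i)) / real n\<bar> \<le> \<epsilon> + 2 * B * (3 * \<epsilon>)" .
      have "norm ((\<Sum>i<n. f (xs n i)) / real n - (\<integral>y. f y \<partial>M)) \<le>
          \<bar>(\<Sum>i<n. f (xs n i)) / real n - (\<Sum>i<n. g (xs n i)) / real n\<bar>
          + \<bar>(\<Sum>i<n. g (xs n i)) / real n - (\<integral>y. g y \<partial>M)\<bar> + \<bar>(\<integral>y. f y \<partial>M) - (\<integral>y. g y \<partial>M)\<bar>"
        by simp
      also have "\<dots> < (\<epsilon> + 2 * B * (3 * \<epsilon>)) + \<epsilon> + (\<epsilon> + 2 * B * (3 * \<epsilon>))"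
        using a I elim(1) by (simp add: dist_real_def)
      also have "\<dots> = \<epsilon> * (3 + 12 * B)" by (simp add: algebra_simps)
      also have "\<dots> \<le> \<epsilon> * (4 + 12 * B)" using \<epsilon> by (intro mult_left_mono) auto
      also have "\<dots> = e" unfolding \<epsilon>_def using B by simp
      finally show ?case .
    qed
    then show "\<exists>no. \<forall>n\<ge>no. norm ((\<Sum>i<n. f (xs n i)) / real n - (\<integral>y. f y \<partial>M)) < e"
      by (simp add: eventually_sequentially)
  qed
  then show ?thesis using fint unfolding conv_def by simp
qed

end

lemma abs_cos_diff: "\<bar>cos a - cos b\<bar> \<le> \<bar>a - b\<bar>" for a b :: real
proof -
  have "\<bar>cos a - cos b\<bar> = 2 * \<bar>sin ((a + b) / 2)\<bar> * \<bar>sin ((b - a) / 2)\<bar>"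
    by (simp add: cos_diff_cos abs_mult)
  also have "\<dots> \<le> 2 * 1 * \<bar>(b - a) / 2\<bar>"
    by (intro mult_mono abs_sin_x_le_abs_x) auto
  finally show ?thesis by simp
qed

lemma abs_sin_diff: "\<bar>sin a - sin b\<bar> \<le> \<bar>a - b\<bar>" for a b :: real
proof -
  have "\<bar>sin a - sin b\<bar> = 2 * \<bar>sin ((a - b) / 2)\<bar> * \<bar>cos ((a + b) / 2)\<bar>"
    by (simp add: sin_diff_sin abs_mult)
  also have "\<dots> \<le> 2 * \<bar>(a - b) / 2\<bar> * 1"
    by (intro mult_mono abs_sin_x_le_abs_x) auto
  finally show ?thesis by simp
qed

lemma lip_cut:
  fixes h :: "real \<Rightarrow> real"
  assumes lip: "\<And>a b. \<bar>h a - h b\<bar> \<le> \<bar>a - b\<bar>" and hL: "h L = 0" "h (-L) = 0"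
  shows "\<bar>(if \<bar>a\<bar> \<le> L then h a else 0) - (if \<bar>b\<bar> \<le> L then h b else 0)\<bar> \<le> \<bar>a - b\<bar>"
proof -
  have one: "\<bar>h a - 0\<bar> \<le> \<bar>a - b\<bar>" if "\<bar>a\<bar> \<le> L" "\<not> \<bar>b\<bar> \<le> L" for a b
  proof (cases "b > L")
    case True
    have "\<bar>h a - h L\<bar> \<le> \<bar>a - L\<bar>" by (rule lip)
    then show ?thesis using True that hL by auto
  next
    case False
    then have "b < -L" using that by auto
    have "\<bar>h a - h (-L)\<bar> \<le> \<bar>a - (-L)\<bar>" by (rule lip)
    then show ?thesis using \<open>b < -L\<close> that hL by auto
  qed
  show ?thesis
    using lip[of a b] one[of a b] one[of b a] by (auto simp: abs_minus_commute)
qed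

lemma Kc_lip:
  assumes "L = 2 * pi * real m"
  shows "\<bar>Kc L a - Kc L b\<bar> \<le> \<bar>a - b\<bar>"
proof -
  have cL: "cos L = 1" using assms cos_int_2pin[of "int m"] by simp
  show ?thesis unfolding Kc_def
    by (rule lip_cut[of "\<lambda>s. cos s - 1"]) (use abs_cos_diff cL in auto)
qed

lemma Ks_lip:
  assumes "L = 2 * pi * real m"
  shows "\<bar>Ks L a - Ks L b\<bar> \<le> \<bar>a - b\<bar>"
proof -
  have sL: "sin L = 0" using assms sin_int_2pin[of "int m"] by simp
  show ?thesis unfolding Ks_def
    by (rule lip_cut[of sin]) (use abs_sin_diff sL in auto)
qed

lemma Kc_bound: "\<bar>Kc L s\<bar> \<le> 2"
  unfolding Kc_def using abs_cos_le_one[of s] by (auto simp: abs_le_iff)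

lemma Ks_bound: "\<bar>Ks L s\<bar> \<le> 2"
  unfolding Ks_def using abs_sin_le_one[of s] by (smt (verit))

lemma Kc_meas[measurable]: "Kc L \<in> borel_measurable borel"
  unfolding Kc_def by measurable

lemma Ks_meas[measurable]: "Ks L \<in> borel_measurable borel"
  unfolding Ks_def by measurable

lemma ip_bound: "\<bar>ip t x\<bar> \<le> (\<Sum>k\<in>UNIV. \<bar>t k\<bar>) * norm x"
proof -
  have "\<bar>ip t x\<bar> \<le> (\<Sum>k\<in>UNIV. \<bar>t k * x$k\<bar>)" unfolding ip_def by (rule sum_abs)
  also have "\<dots> \<le> (\<Sum>k\<in>UNIV. \<bar>t k\<bar> * norm x)"
    by (intro sum_mono) (simp add: abs_mult mult_left_mono component_le_norm_cart)
  finally show ?thesis by (simp add: sum_distrib_right)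
qed

lemma ip_diff_bound:
  fixes \<theta> t :: "'p::finite \<Rightarrow> real" and x :: "real^'p"
  assumes "\<forall>k. \<bar>\<theta> k - t k\<bar> < \<delta>"
  shows "\<bar>ip \<theta> x - ip t x\<bar> \<le> \<delta> * CARD('p) * norm x"
proof -
  have "ip \<theta> x - ip t x = ip (\<lambda>k. \<theta> k - t k) x" unfolding ip_def by (simp add: sum_subtractf algebra_simps)
  then have "\<bar>ip \<theta> x - ip t x\<bar> \<le> (\<Sum>k\<in>(UNIV::'p set). \<bar>\<theta> k - t k\<bar>) * norm x"
    using ip_bound[of "\<lambda>k. \<theta> k - t k" x] by simp
  also have "\<dots> \<le> (\<Sum>k\<in>(UNIV::'p set). \<delta>) * norm x"
    using assms by (intro mult_right_mono sum_mono) (auto intro: less_imp_le)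
  finally show ?thesis by (simp add: mult.commute)
qed

definition box :: "('p::finite \<Rightarrow> real) \<Rightarrow> real \<Rightarrow> ('p \<Rightarrow> real) set" where
  "box t \<delta> = Pi\<^sub>E UNIV (\<lambda>k. {t k - \<delta> <..< t k + \<delta>})"

lemma box_PiE: "box t \<delta> = Pi\<^sub>E UNIV (\<lambda>k. {t k - \<delta> <..< t k + \<delta>})"
  by (rule box_def)

lemma in_box: "\<theta> \<in> box t \<delta> \<Longrightarrow> \<bar>\<theta> k - t k\<bar> < \<delta>"
  unfolding box_def by (auto simp: PiE_def Pi_def abs_less_iff) (smt (verit, best) UNIV_I greaterThanLessThan_iff)+

lemma box_sets[measurable]: "box t \<delta> \<in> sets (Gam :: ('p::finite \<Rightarrow> real) measure)"
  unfolding box_PiE Gam_def by (intro sets_PiM_I_finite) auto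

lemma std_interval_pos:
  assumes "a < b"
  shows "emeasure (density lborel std_normal_density) {a<..<b} \<noteq> 0"
proof
  assume "emeasure (density lborel std_normal_density) {a<..<b} = 0"
  then have "(\<integral>\<^sup>+x. ennreal (std_normal_density x) * indicator {a<..<b} x \<partial>lborel) = 0"
    by (simp add: emeasure_density)
  then have "AE x in lborel. ennreal (std_normal_density x) * indicator {a<..<b} x = 0"
    by (subst (asm) nn_integral_0_iff_AE) auto
  then have "AE x in lborel. x \<notin> {a<..<b}"
  proof eventually_elim
    case (elim x)
    show ?case
    proof
      assume "x \<in> {a<..<b}"
      then have "ennreal (std_normal_density x) = 0" using elim by simp
      then show False using normal_density_pos[of 1 0 x] by simp
    qed
  qed
  then have "{a<..<b} \<in> null_sets lborel" by (subst AE_iff_null_sets) auto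
  then show False using assms by (simp add: null_sets_def emeasure_lborel_Ioo)
qed

lemma box_pos:
  assumes "0 < \<delta>"
  shows "0 < measure (Gam :: ('p::finite \<Rightarrow> real) measure) (box t \<delta>)"
proof -
  interpret prob_space "Gam :: ('p \<Rightarrow> real) measure" by (rule prob_space_Gam)
  interpret PS: product_sigma_finite "\<lambda>_::'p. density lborel std_normal_density"
    unfolding product_sigma_finite_def using prob_space_std prob_space_imp_sigma_finite by blast
  have "emeasure (Gam :: ('p \<Rightarrow> real) measure) (box t \<delta>) = (\<Prod>k\<in>UNIV. emeasure (density lborel std_normal_density) {t k - \<delta> <..< t k + \<delta>})"
    unfolding box_PiE Gam_def by (subst PS.emeasure_PiM) auto
  also have "\<dots> \<noteq> 0"
    using std_interval_pos assms by (subst ennreal_prod_eq_0) auto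
  finally have "emeasure (Gam :: ('p \<Rightarrow> real) measure) (box t \<delta>) \<noteq> 0" .
  then show ?thesis by (simp add: emeasure_eq_measure zero_less_measure_iff)
qed

lemma meas_ip_x[measurable]: "(\<lambda>x. ip t x) \<in> borel_measurable (borel :: (real^'p::finite) measure)"
  unfolding ip_def by measurable

context ED2 begin

lemma meas_ip_M[measurable]: "(\<lambda>x. ip t x) \<in> borel_measurable M"
  by (subst measurable_cong_sets[OF sets_M refl]) (rule meas_ip_x)

lemma conv_avg:
  fixes K :: "real \<Rightarrow> real"
  assumes Km[measurable]: "K \<in> borel_measurable borel" and Kb: "\<And>s. \<bar>K s\<bar> \<le> 2"
    and Kl: "\<And>a b. \<bar>K a - K b\<bar> \<le> \<bar>a - b\<bar>"
    and Kc: "\<And>\<phi>. \<phi> \<in> borel_measurable Gam \<Longrightarrow> (\<And>\<theta>. \<bar>\<phi> \<theta>\<bar> \<le> 1) \<Longrightarrow> conv (\<lambda>x. \<integral>\<theta>. \<phi> \<theta> * K (ip \<theta> x) \<partial>(Gam :: ('p \<Rightarrow> real) measure))"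
  shows "conv (\<lambda>x. K (ip t x))"
proof (rule conv_approx[where B=2])
  show "integrable M (\<lambda>x. K (ip t x))"
    by (rule integrable_const_bound[where B=2]) (auto simp: Kb)
  show "\<bar>K (ip t x)\<bar> \<le> 2" for x by (rule Kb)
  fix \<epsilon> \<rho> :: real assume e: "0 < \<epsilon>"
  interpret G: prob_space "Gam :: ('p \<Rightarrow> real) measure" by (rule prob_space_Gam)
  define \<delta> where "\<delta> = \<epsilon> / (CARD('p) * (\<bar>\<rho>\<bar> + 1))"
  have \<delta>: "0 < \<delta>" unfolding \<delta>_def using e by (simp add: add_pos_nonneg)
  define B where "B = box t \<delta>"
  define m0 where "m0 = measure (Gam :: ('p \<Rightarrow> real) measure) B"
  have m0: "0 < m0" unfolding m0_def B_def by (rule box_pos[OF \<delta>])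
  define g where "g x = (1 / m0) * (\<integral>\<theta>. indicator B \<theta> * K (ip \<theta> x) \<partial>(Gam :: ('p \<Rightarrow> real) measure))" for x
  have Bs[measurable]: "B \<in> sets (Gam :: ('p \<Rightarrow> real) measure)" unfolding B_def by simp
  have iK: "integrable (Gam :: ('p \<Rightarrow> real) measure) (\<lambda>\<theta>. indicator B \<theta> * K (ip \<theta> x))" for x
    by (rule G.integrable_const_bound[where B=2]) (auto simp: indicator_def Kb)
  have iB: "integrable (Gam :: ('p \<Rightarrow> real) measure) (\<lambda>\<theta>. indicator B \<theta> * c)" for c :: real
    by (rule G.integrable_const_bound[where B="\<bar>c\<bar>"]) (auto simp: indicator_def)
  have intB: "(\<integral>\<theta>. indicator B \<theta> * c \<partial>(Gam :: ('p \<Rightarrow> real) measure)) = m0 * c" for c :: real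
    unfolding m0_def by simp
  have "conv g" unfolding g_def
    by (rule conv_cmult, rule Kc) (auto simp: indicator_def)
  moreover have "\<bar>g x\<bar> \<le> 2" for x
  proof -
    have "\<bar>\<integral>\<theta>. indicator B \<theta> * K (ip \<theta> x) \<partial>(Gam :: ('p \<Rightarrow> real) measure)\<bar> \<le> (\<integral>\<theta>. indicator B \<theta> * 2 \<partial>(Gam :: ('p \<Rightarrow> real) measure))"
    proof -
      have "\<bar>\<integral>\<theta>. indicator B \<theta> * K (ip \<theta> x) \<partial>(Gam :: ('p \<Rightarrow> real) measure)\<bar> \<le> (\<integral>\<theta>. \<bar>indicator B \<theta> * K (ip \<theta> x)\<bar> \<partial>(Gam :: ('p \<Rightarrow> real) measure))"
        by (rule integral_abs_bound)
      also have "\<dots> \<le> (\<integral>\<theta>. indicator B \<theta> * 2 \<partial>(Gam :: ('p \<Rightarrow> real) measure))"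
        using iK iB by (intro integral_mono) (auto simp: indicator_def Kb)
      finally show ?thesis .
    qed
    then show ?thesis unfolding g_def intB using m0 by (simp add: abs_mult divide_le_eq)
  qed
  moreover have "\<bar>g x - K (ip t x)\<bar> \<le> \<epsilon>" if x: "norm x \<le> \<rho>" for x
  proof -
    have "g x - K (ip t x) = (1 / m0) * ((\<integral>\<theta>. indicator B \<theta> * K (ip \<theta> x) \<partial>(Gam :: ('p \<Rightarrow> real) measure)) - (\<integral>\<theta>. indicator B \<theta> * K (ip t x) \<partial>(Gam :: ('p \<Rightarrow> real) measure)))"
      unfolding g_def intB using m0 by (simp add: field_simps)
    also have "\<dots> = (1 / m0) * (\<integral>\<theta>. indicator B \<theta> * (K (ip \<theta> x) - K (ip t x)) \<partial>(Gam :: ('p \<Rightarrow> real) measure))"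
      using iK iB by (simp add: right_diff_distrib)
    finally have eq: "g x - K (ip t x) = (1 / m0) * (\<integral>\<theta>. indicator B \<theta> * (K (ip \<theta> x) - K (ip t x)) \<partial>(Gam :: ('p \<Rightarrow> real) measure))" .
    have pt: "\<bar>indicator B \<theta> * (K (ip \<theta> x) - K (ip t x))\<bar> \<le> indicator B \<theta> * (\<delta> * CARD('p) * norm x)" for \<theta>
    proof (cases "\<theta> \<in> B")
      case True
      then have "\<forall>k. \<bar>\<theta> k - t k\<bar> < \<delta>" unfolding B_def using in_box by blast
      then have "\<bar>ip \<theta> x - ip t x\<bar> \<le> \<delta> * CARD('p) * norm x" by (rule ip_diff_bound)
      then show ?thesis using True Kl[of "ip \<theta> x" "ip t x"] by simp
    qed simp
    have i2: "integrable (Gam :: ('p \<Rightarrow> real) measure) (\<lambda>\<theta>. indicator B \<theta> * (K (ip \<theta> x) - K (ip t x)))"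
      using iK iB by (simp add: right_diff_distrib)
    have "\<bar>\<integral>\<theta>. indicator B \<theta> * (K (ip \<theta> x) - K (ip t x)) \<partial>(Gam :: ('p \<Rightarrow> real) measure)\<bar>
        \<le> (\<integral>\<theta>. indicator B \<theta> * (\<delta> * CARD('p) * norm x) \<partial>(Gam :: ('p \<Rightarrow> real) measure))"
    proof -
      have "\<bar>\<integral>\<theta>. indicator B \<theta> * (K (ip \<theta> x) - K (ip t x)) \<partial>(Gam :: ('p \<Rightarrow> real) measure)\<bar> \<le> (\<integral>\<theta>. \<bar>indicator B \<theta> * (K (ip \<theta> x) - K (ip t x))\<bar> \<partial>(Gam :: ('p \<Rightarrow> real) measure))"
        by (rule integral_abs_bound)
      also have "\<dots> \<le> (\<integral>\<theta>. indicator B \<theta> * (\<delta> * CARD('p) * norm x) \<partial>(Gam :: ('p \<Rightarrow> real) measure))"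
        using i2 iB by (intro integral_mono pt) auto
      finally show ?thesis .
    qed
    also have "\<dots> = m0 * (\<delta> * CARD('p) * norm x)" by (rule intB)
    finally have a: "\<bar>g x - K (ip t x)\<bar> \<le> \<delta> * CARD('p) * norm x"
      unfolding eq using m0 by (simp add: abs_mult divide_le_eq mult.commute)
    have "\<delta> * CARD('p) * norm x \<le> \<delta> * CARD('p) * (\<bar>\<rho>\<bar> + 1)"
      using x \<delta> by (intro mult_left_mono) auto
    also have "\<dots> = \<epsilon>" unfolding \<delta>_def by (simp add: add_pos_nonneg)
    finally show ?thesis using a by simp
  qed
  ultimately show "\<exists>g. conv g \<and> (\<forall>x. \<bar>g x\<bar> \<le> 2) \<and> (\<forall>x. norm x \<le> \<rho> \<longrightarrow> \<bar>g x - K (ip t x)\<bar> \<le> \<epsilon>)"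
    by blast
qed

lemma K_sin2: "L = 2 * pi * real m \<Longrightarrow> (\<integral>r. cos r * indicator {-L..L} r * indicator {s..} r \<partial>lborel) = - Ks L s"
  using K_sin[of L m s] by simp

lemma conv_Kc: "L = 2 * pi * real m \<Longrightarrow> conv (\<lambda>x. Kc L (ip t x))"
proof (rule conv_avg)
  assume L: "L = 2 * pi * real m"
  show "\<bar>Kc L a - Kc L b\<bar> \<le> \<bar>a - b\<bar>" for a b by (rule Kc_lip[OF L])
  fix \<phi> :: "('p \<Rightarrow> real) \<Rightarrow> real"
  assume "\<phi> \<in> borel_measurable Gam" "\<And>\<theta>. \<bar>\<phi> \<theta>\<bar> \<le> 1"
  from conv_prod[OF this, of sin L]
  show "conv (\<lambda>x. \<integral>\<theta>. \<phi> \<theta> * Kc L (ip \<theta> x) \<partial>Gam)"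
    by (simp add: K_cos[OF L] continuous_intros)
qed (auto simp: Kc_bound)

lemma conv_Ks: "L = 2 * pi * real m \<Longrightarrow> conv (\<lambda>x. Ks L (ip t x))"
proof (rule conv_avg)
  assume L: "L = 2 * pi * real m"
  show "\<bar>Ks L a - Ks L b\<bar> \<le> \<bar>a - b\<bar>" for a b by (rule Ks_lip[OF L])
  fix \<phi> :: "('p \<Rightarrow> real) \<Rightarrow> real"
  assume "\<phi> \<in> borel_measurable Gam" "\<And>\<theta>. \<bar>\<phi> \<theta>\<bar> \<le> 1"
  from conv_prod[OF this, of "\<lambda>r. - cos r" L]
  show "conv (\<lambda>x. \<integral>\<theta>. \<phi> \<theta> * Ks L (ip \<theta> x) \<partial>Gam)"
    by (simp add: K_sin2[OF L] continuous_intros)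
qed (auto simp: Ks_bound)

end

context ED2 begin

lemma conv_cos: "conv (\<lambda>x. cos (ip t x))"
proof (rule conv_approx[where B=1])
  show "integrable M (\<lambda>x. cos (ip t x))"
    by (rule integrable_const_bound[where B=1]) auto
  show "\<bar>cos (ip t x)\<bar> \<le> 1" for x by simp
  fix \<epsilon> \<rho> :: real assume e: "0 < \<epsilon>"
  define S where "S = (\<Sum>k\<in>UNIV. \<bar>t k\<bar>)"
  have S: "0 \<le> S" unfolding S_def by (simp add: sum_nonneg)
  define m where "m = nat \<lceil>S * \<bar>\<rho>\<bar> / (2 * pi)\<rceil>"
  define L where "L = 2 * pi * real m"
  have SL: "S * \<bar>\<rho>\<bar> \<le> L"
  proof -
    have "S * \<bar>\<rho>\<bar> / (2 * pi) \<le> real m" unfolding m_def by linarith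
    then show ?thesis unfolding L_def by (simp add: divide_le_eq mult.commute)
  qed
  have "conv (\<lambda>x. Kc L (ip t x) + 1)"
    by (intro conv_add conv_Kc[OF L_def] conv_const)
  moreover have "\<bar>Kc L (ip t x) + 1\<bar> \<le> 1" for x
    by (simp add: Kc_def)
  moreover have "\<bar>Kc L (ip t x) + 1 - cos (ip t x)\<bar> \<le> \<epsilon>" if "norm x \<le> \<rho>" for x
  proof -
    have "\<bar>ip t x\<bar> \<le> S * norm x" unfolding S_def by (rule ip_bound)
    also have "\<dots> \<le> S * \<bar>\<rho>\<bar>" using that S by (intro mult_left_mono) auto
    finally have "\<bar>ip t x\<bar> \<le> L" using SL by simp
    then show ?thesis using e by (simp add: Kc_def)
  qed
  ultimately show "\<exists>g. conv g \<and> (\<forall>x. \<bar>g x\<bar> \<le> 1) \<and> (\<forall>x. norm x \<le> \<rho> \<longrightarrow> \<bar>g x - cos (ip t x)\<bar> \<le> \<epsilon>)"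
    by blast
qed

lemma conv_sin: "conv (\<lambda>x. sin (ip t x))"
proof (rule conv_approx[where B=1])
  show "integrable M (\<lambda>x. sin (ip t x))"
    by (rule integrable_const_bound[where B=1]) auto
  show "\<bar>sin (ip t x)\<bar> \<le> 1" for x by simp
  fix \<epsilon> \<rho> :: real assume e: "0 < \<epsilon>"
  define S where "S = (\<Sum>k\<in>UNIV. \<bar>t k\<bar>)"
  have S: "0 \<le> S" unfolding S_def by (simp add: sum_nonneg)
  define m where "m = nat \<lceil>S * \<bar>\<rho>\<bar> / (2 * pi)\<rceil>"
  define L where "L = 2 * pi * real m"
  have SL: "S * \<bar>\<rho>\<bar> \<le> L"
  proof -
    have "S * \<bar>\<rho>\<bar> / (2 * pi) \<le> real m" unfolding m_def by linarith
    then show ?thesis unfolding L_def by (simp add: divide_le_eq mult.commute)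
  qed
  have "conv (\<lambda>x. Ks L (ip t x))"
    by (rule conv_Ks[OF L_def])
  moreover have "\<bar>Ks L (ip t x)\<bar> \<le> 1" for x
    by (simp add: Ks_def)
  moreover have "\<bar>Ks L (ip t x) - sin (ip t x)\<bar> \<le> \<epsilon>" if "norm x \<le> \<rho>" for x
  proof -
    have "\<bar>ip t x\<bar> \<le> S * norm x" unfolding S_def by (rule ip_bound)
    also have "\<dots> \<le> S * \<bar>\<rho>\<bar>" using that S by (intro mult_left_mono) auto
    finally have "\<bar>ip t x\<bar> \<le> L" using SL by simp
    then show ?thesis using e by (simp add: Ks_def)
  qed
  ultimately show "\<exists>g. conv g \<and> (\<forall>x. \<bar>g x\<bar> \<le> 1) \<and> (\<forall>x. norm x \<le> \<rho> \<longrightarrow> \<bar>g x - sin (ip t x)\<bar> \<le> \<epsilon>)"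
    by blast
qed

end

definition ef :: "(complex \<times> ('p::finite \<Rightarrow> real)) list \<Rightarrow> real^'p \<Rightarrow> complex" where
  "ef L x = sum_list (map (\<lambda>(c,t). c * cis (ip t x)) L)"

definition trig :: "(real^'p::finite \<Rightarrow> real) set" where
  "trig = {f. \<exists>L. f = (\<lambda>x. Re (ef L x))}"

definition prodL :: "(complex \<times> ('p::finite \<Rightarrow> real)) list \<Rightarrow> (complex \<times> ('p \<Rightarrow> real)) list \<Rightarrow> (complex \<times> ('p \<Rightarrow> real)) list" where
  "prodL L1 L2 = concat (map (\<lambda>(c,s). map (\<lambda>(d,t). (c * d, \<lambda>k. s k + t k)) L2) L1)"

lemma ip_add: "ip (\<lambda>k. s k + t k) x = ip s x + ip t x"
  unfolding ip_def by (simp add: sum.distrib algebra_simps)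

lemma ip_uminus: "ip (\<lambda>k. - t k) x = - ip t x"
  unfolding ip_def by (simp add: sum_negf)

lemma ef_append: "ef (L1 @ L2) x = ef L1 x + ef L2 x"
  unfolding ef_def by simp

lemma ef_Nil[simp]: "ef [] x = 0" unfolding ef_def by simp
lemma ef_Cons: "ef ((c,t) # L) x = c * cis (ip t x) + ef L x" unfolding ef_def by simp

lemma ef_cnj: "ef (map (\<lambda>(c,t). (cnj c, \<lambda>k. - t k)) L) x = cnj (ef L x)"
  by (induction L) (auto simp: ef_Cons ip_uminus cis_cnj)

lemma ef_scale: "ef (map (\<lambda>(c,t). (a * c, t)) L) x = a * ef L x"
  by (induction L) (auto simp: ef_Cons algebra_simps)

lemma ef_prod1: "ef (map (\<lambda>(d,t). (c * d, \<lambda>k. s k + t k)) L2) x = c * cis (ip s x) * ef L2 x"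
  by (induction L2) (auto simp: ef_Cons ip_add cis_mult[symmetric] algebra_simps)

lemma ef_prod: "ef (prodL L1 L2) x = ef L1 x * ef L2 x"
proof (induction L1)
  case Nil then show ?case by (simp add: prodL_def ef_def)
next
  case (Cons a L1)
  obtain c s where a: "a = (c, s)" by force
  have "ef (prodL (a # L1) L2) x = ef (map (\<lambda>(d,t). (c * d, \<lambda>k. s k + t k)) L2) x + ef (prodL L1 L2) x"
    unfolding prodL_def a by (simp add: ef_append)
  also have "\<dots> = c * cis (ip s x) * ef L2 x + ef L1 x * ef L2 x" by (simp only: ef_prod1 Cons.IH)
  also have "\<dots> = ef (a # L1) x * ef L2 x" by (simp add: a ef_Cons algebra_simps)
  finally show ?case .
qed

lemma Re_mult_Re: "Re a * Re b = Re (a * b) / 2 + Re (a * cnj b) / 2"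
  by (simp add: field_simps)

lemma trig_const: "(\<lambda>x. c) \<in> trig"
  unfolding trig_def by (rule CollectI, rule exI[of _ "[(complex_of_real c, \<lambda>_. 0)]"]) (simp add: ef_def ip_def)

lemma trig_add: "f \<in> trig \<Longrightarrow> g \<in> trig \<Longrightarrow> (\<lambda>x. f x + g x) \<in> trig"
proof -
  assume "f \<in> trig" "g \<in> trig"
  then obtain L1 L2 where f: "f = (\<lambda>x. Re (ef L1 x))" and g: "g = (\<lambda>x. Re (ef L2 x))"
    unfolding trig_def by blast
  have "(\<lambda>x. f x + g x) = (\<lambda>x. Re (ef (L1 @ L2) x))" unfolding f g by (simp add: ef_append)
  then show ?thesis unfolding trig_def by blast
qed

lemma trig_mult: "f \<in> trig \<Longrightarrow> g \<in> trig \<Longrightarrow> (\<lambda>x. f x * g x) \<in> trig"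
proof -
  assume "f \<in> trig" "g \<in> trig"
  then obtain L1 L2 where f: "f = (\<lambda>x. Re (ef L1 x))" and g: "g = (\<lambda>x. Re (ef L2 x))"
    unfolding trig_def by blast
  define L where "L = map (\<lambda>(c,t). ((1/2) * c, t)) (prodL L1 L2 @ prodL L1 (map (\<lambda>(c,t). (cnj c, \<lambda>k. - t k)) L2))"
  have "Re (ef L x) = f x * g x" for x
    unfolding L_def f g Re_mult_Re ef_scale ef_append ef_prod ef_cnj by (simp add: field_simps)
  then show ?thesis unfolding trig_def by (auto intro!: exI[of _ L])
qed

lemma cont_ef: "continuous_on UNIV (ef L)"
  by (induction L) (auto simp: ef_Cons ip_def intro!: continuous_intros)

lemma trig_cont: "f \<in> trig \<Longrightarrow> continuous_on S f"
  unfolding trig_def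
  by (auto intro!: continuous_intros continuous_on_subset[OF cont_ef])

lemma ef_bound: "norm (ef L x) \<le> (\<Sum>(c,t)\<leftarrow>L. norm c)"
proof (induction L)
  case Nil then show ?case by simp
next
  case (Cons a L) then show ?case
    by (cases a) (auto simp: ef_Cons norm_mult intro!: order_trans[OF norm_triangle_ineq])
qed

lemma trig_bounded: "f \<in> trig \<Longrightarrow> \<exists>K. \<forall>x. \<bar>f x\<bar> \<le> K"
  unfolding trig_def using ef_bound abs_Re_le_cmod order_trans by blast

lemma trig_sep:
  fixes x y :: "real^'p::finite"
  assumes "x \<noteq> y"
  shows "\<exists>f\<in>trig. f x \<noteq> f y"
proof (rule ccontr)
  assume "\<not> ?thesis"
  then have eq: "f x = f y" if "f \<in> trig" for f using that by blast
  define t where "t = (\<lambda>k. (x - y)$k / (norm (x - y))\<^sup>2)"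
  have n: "norm (x - y) \<noteq> 0" using assms by simp
  have "ip t x - ip t y = ip t (x - y)" by (simp add: ip_diff)
  also have "\<dots> = (\<Sum>k\<in>UNIV. ((x - y)$k)\<^sup>2) / (norm (x - y))\<^sup>2"
    unfolding ip_def t_def by (simp add: sum_divide_distrib power2_eq_square)
  also have "\<dots> = 1" using n by (simp add: norm_vec_def L2_set_def sum_nonneg)
  finally have d: "ip t x - ip t y = 1" .
  have "(\<lambda>x. Re (ef [(1, t)] x)) \<in> trig" unfolding trig_def by blast
  from eq[OF this] have c: "cos (ip t x) = cos (ip t y)" by (simp add: ef_def)
  have "(\<lambda>x. Re (ef [(- \<i>, t)] x)) \<in> trig" unfolding trig_def by blast
  from eq[OF this] have s: "sin (ip t x) = sin (ip t y)" by (simp add: ef_def)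
  have "sin (ip t x - ip t y) = 0" unfolding sin_diff c s by simp
  with d show False using sin_gt_zero[of 1] pi_gt3 by simp
qed

lemma trig_ring: "function_ring_on trig (cball (0::real^'p::finite) r)"
  by unfold_locales (auto intro: trig_cont trig_add trig_mult trig_const trig_sep)

lemma trig_poly:
  fixes q :: "real \<Rightarrow> real"
  assumes "polynomial_function q" "P \<in> trig"
  shows "(\<lambda>x. q (P x)) \<in> trig"
proof -
  have "real_polynomial_function q" using assms(1) by (simp add: real_polynomial_function_eq)
  then show ?thesis
  proof (induction q rule: real_polynomial_function.induct)
    case (linear f)
    then obtain c where "f = (\<lambda>x. x * c)" by (auto simp: real_bounded_linear)
    then show ?case using trig_mult[OF assms(2) trig_const[of c]] by simp
  next
    case (const c) then show ?case by (rule trig_const)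
  next
    case (add f g) then show ?case by (intro trig_add) auto
  next
    case (mult f g) then show ?case by (intro trig_mult) auto
  qed
qed

lemma clamp_lip: "\<bar>max (-B) (min B a) - max (-B) (min B b)\<bar> \<le> \<bar>a - b\<bar>" for a b B :: real
  by (simp add: max_def min_def abs_if)

context ED2 begin

lemma conv_trig: "f \<in> trig \<Longrightarrow> conv f"
proof -
  assume "f \<in> trig"
  then obtain L where f: "f = (\<lambda>x. Re (ef L x))" unfolding trig_def by blast
  have "conv (\<lambda>x. Re (ef L x))"
  proof (induction L)
    case Nil then show ?case using conv_const[of 0] by simp
  next
    case (Cons a L)
    obtain c t where a: "a = (c, t)" by force
    have "conv (\<lambda>x. (Re c * cos (ip t x) + (- Im c) * sin (ip t x)) + Re (ef L x))"
      by (intro conv_add conv_cmult conv_cos conv_sin Cons.IH)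
    then show ?case
      by (rule conv_cong[rotated]) (simp add: a ef_Cons cis.ctr)
  qed
  then show ?thesis using f by simp
qed

lemma conv_bcont:
  fixes f :: "real^'p \<Rightarrow> real"
  assumes fc: "continuous_on UNIV f" and fB: "\<And>x. \<bar>f x\<bar> \<le> B"
  shows "conv f"
proof (rule conv_approx[where B="B+1"])
  have [measurable]: "f \<in> borel_measurable M"
    by (subst measurable_cong_sets[OF sets_M refl]) (rule borel_measurable_continuous_onI[OF fc])
  show "integrable M f" by (rule integrable_const_bound[where B=B]) (auto simp: fB)
  show "\<bar>f x\<bar> \<le> B + 1" for x using fB[of x] by simp
  fix \<epsilon> \<rho> :: real assume e: "0 < \<epsilon>"
  define e' where "e' = min \<epsilon> 1 / 2"
  have e': "0 < e'" "e' \<le> 1/2" "2 * e' \<le> \<epsilon>" unfolding e'_def using e by auto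
  obtain P where P: "P \<in> trig" "\<And>x. x \<in> cball 0 \<rho> \<Longrightarrow> \<bar>f x - P x\<bar> < e'"
    using function_ring_on.Stone_Weierstrass_basic[OF trig_ring[of \<rho>], of f e'] e'(1) fc
      continuous_on_subset[OF fc] by blast
  obtain K0 where K0: "\<And>x. \<bar>P x\<bar> \<le> K0" using trig_bounded[OF P(1)] by blast
  define cl where "cl s = max (-B) (min B s)" for s
  have clc: "continuous_on {-K0..K0} cl" unfolding cl_def by (intro continuous_intros)
  obtain q where q: "polynomial_function q" "\<And>s. s \<in> {-K0..K0} \<Longrightarrow> norm (cl s - q s) < e'"
    using Stone_Weierstrass_polynomial_function[OF compact_Icc clc e'(1)] by blast
  have B0: "0 \<le> B" using fB[of 0] by simp
  have "conv (\<lambda>x. q (P x))" by (rule conv_trig[OF trig_poly[OF q(1) P(1)]])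
  moreover have "\<bar>q (P x)\<bar> \<le> B + 1" for x
  proof -
    have "P x \<in> {-K0..K0}" using K0[of x] by (auto simp: abs_le_iff)
    then have "\<bar>cl (P x) - q (P x)\<bar> < e'" using q(2) by simp
    moreover have "\<bar>cl (P x)\<bar> \<le> B" unfolding cl_def using B0 by (auto simp: max_def min_def)
    ultimately show ?thesis using e' by linarith
  qed
  moreover have "\<bar>q (P x) - f x\<bar> \<le> \<epsilon>" if x: "norm x \<le> \<rho>" for x
  proof -
    have "P x \<in> {-K0..K0}" using K0[of x] by (auto simp: abs_le_iff)
    then have a: "\<bar>cl (P x) - q (P x)\<bar> < e'" using q(2) by simp
    have "cl (f x) = f x" unfolding cl_def using fB[of x] by (auto simp: max_def min_def abs_le_iff)
    then have "\<bar>cl (P x) - f x\<bar> \<le> \<bar>P x - f x\<bar>" unfolding cl_def using clamp_lip[of B "P x" "f x"] by metis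
    moreover have "\<bar>f x - P x\<bar> < e'" using P(2)[of x] x by (simp add: dist_norm)
    ultimately show ?thesis using a e' by (simp add: abs_minus_commute)
  qed
  ultimately show "\<exists>g. conv g \<and> (\<forall>x. \<bar>g x\<bar> \<le> B + 1) \<and> (\<forall>x. norm x \<le> \<rho> \<longrightarrow> \<bar>g x - f x\<bar> \<le> \<epsilon>)"
    by blast
qed

end

lemma emp_integral:
  assumes "n \<ge> 1"
  shows "(\<integral>x. f x \<partial>(empirical_distr n xs)) = (\<Sum>i<n. f (xs i)) / real n"
proof -
  have "0 \<in> {..<n}" using assms by simp
  then have ne: "{..<n} \<noteq> {}" by blast
  show ?thesis unfolding empirical_distr_def
    by (simp add: integral_map_pmf, subst integral_pmf_of_set[OF ne]) auto
qed

theorem theorem2: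
  fixes M :: "(real^'p) measure" and X :: "(real^'p) set" and \<xi> :: "nat \<Rightarrow> nat \<Rightarrow> real^'p"
  assumes "prob_space M"
    and "sets M = sets borel"
    and "X \<noteq> {}"
    and "AE x in M. x \<in> X"
    and "continuous_on UNIV (cdf_vec M)"
    and "integrable M norm"
    and "\<And>n. n \<ge> 1 \<Longrightarrow> support_points M X n (\<xi> n)"
  shows "conv_distr (\<lambda>n. empirical_distr n (\<xi> n)) M"
proof -
  interpret E: ED M by (rule ED.intro[OF assms(1) assms(2) assms(6)])
  have En: "0 \<le> energy_distance M n (\<xi> n) \<and> energy_distance M n (\<xi> n) \<le> E.CM / real n" if n: "n \<ge> 1" for n
  proof -
    obtain x where x: "\<forall>i<n. x i \<in> X" "energy_distance M n x \<le> E.CM / real n"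
      using E.exists_good[OF n assms(4)] by blast
    have "energy_distance M n (\<xi> n) \<le> energy_distance M n x"
      using assms(7)[OF n] x(1) unfolding support_points_def by blast
    then show ?thesis using x(2) E.energy_nonneg[OF n] by simp
  qed
  have Elim: "(\<lambda>n. energy_distance M n (\<xi> n)) \<longlonglongrightarrow> 0"
  proof (rule tendsto_sandwich[of "\<lambda>_. 0" _ _ "\<lambda>n. E.CM / real n"])
    show "\<forall>\<^sub>F n in sequentially. 0 \<le> energy_distance M n (\<xi> n)"
      using eventually_ge_at_top[of "1::nat"] by eventually_elim (use En in auto)
    show "\<forall>\<^sub>F n in sequentially. energy_distance M n (\<xi> n) \<le> E.CM / real n"
      using eventually_ge_at_top[of "1::nat"] by eventually_elim (use En in auto)
    show "(\<lambda>n. E.CM / real n) \<longlonglongrightarrow> 0" by (rule lim_const_over_n)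
  qed simp
  have Qeq: "(\<integral>w. ((\<Sum>i<n. Ind w (\<xi> n i)) / real n - E.G w)\<^sup>2 \<partial>(Nm :: (('p \<Rightarrow> real) \<times> real) measure))
      = (sqrt (2/pi) / 2) * energy_distance M n (\<xi> n)" if n: "n \<ge> 1" for n
  proof -
    have "sqrt (2/pi) * energy_distance M n (\<xi> n) = (\<integral>w. 2 * ((\<Sum>i<n. Ind w (\<xi> n i)) / real n - E.G w)\<^sup>2 \<partial>(Nm :: (('p \<Rightarrow> real) \<times> real) measure))"
      by (rule E.energy_id(2)[OF n])
    then show ?thesis by simp
  qed
  interpret E2: ED2 M \<xi>
  proof unfold_locales
    fix n :: nat assume n: "n \<ge> 1"
    have "integrable (Nm :: (('p \<Rightarrow> real) \<times> real) measure) (\<lambda>w. (1/2) * (2 * ((\<Sum>i<n. Ind w (\<xi> n i)) / real n - E.G w)\<^sup>2))"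
      by (rule integrable_mult_right[OF E.energy_id(1)[OF n]])
    then show "integrable (Nm :: (('p \<Rightarrow> real) \<times> real) measure) (\<lambda>w. ((\<Sum>i<n. Ind w (\<xi> n i)) / real n - E.G w)\<^sup>2)"
      by simp
  next
    have "(\<lambda>n. (sqrt (2/pi) / 2) * energy_distance M n (\<xi> n)) \<longlonglongrightarrow> (sqrt (2/pi) / 2) * 0"
      by (rule tendsto_mult_left[OF Elim])
    then have "(\<lambda>n. (sqrt (2/pi) / 2) * energy_distance M n (\<xi> n)) \<longlonglongrightarrow> 0" by simp
    moreover have "\<forall>\<^sub>F n in sequentially. (sqrt (2/pi) / 2) * energy_distance M n (\<xi> n) =
        (\<integral>w. ((\<Sum>i<n. Ind w (\<xi> n i)) / real n - E.G w)\<^sup>2 \<partial>(Nm :: (('p \<Rightarrow> real) \<times> real) measure))"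
      using eventually_ge_at_top[of "1::nat"] by eventually_elim (use Qeq in auto)
    ultimately show "(\<lambda>n. \<integral>w. ((\<Sum>i<n. Ind w (\<xi> n i)) / real n - E.G w)\<^sup>2 \<partial>(Nm :: (('p \<Rightarrow> real) \<times> real) measure)) \<longlonglongrightarrow> 0"
      by (rule Lim_transform_eventually)
  qed
  show ?thesis unfolding conv_distr_def
  proof (intro allI impI)
    fix f :: "real^'p \<Rightarrow> real"
    assume f: "continuous_on UNIV f \<and> bounded (range f)"
    then obtain B where B: "\<And>x. \<bar>f x\<bar> \<le> B" by (auto simp: bounded_iff)
    have "E2.conv f" by (rule E2.conv_bcont[OF conjunct1[OF f] B])
    then have t: "(\<lambda>n. (\<Sum>i<n. f (\<xi> n i)) / real n) \<longlonglongrightarrow> (\<integral>x. f x \<partial>M)"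
      unfolding E2.conv_def by simp
    have "\<forall>\<^sub>F n in sequentially. (\<Sum>i<n. f (\<xi> n i)) / real n = (\<integral>x. f x \<partial>(empirical_distr n (\<xi> n)))"
      using eventually_ge_at_top[of "1::nat"] by eventually_elim (simp add: emp_integral)
    from Lim_transform_eventually[OF t this]
    show "(\<lambda>n. \<integral>x. f x \<partial>(empirical_distr n (\<xi> n))) \<longlonglongrightarrow> (\<integral>x. f x \<partial>M)" .
  qed
qed

end
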